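(* Let $K$ be a field, $s\ge2$, $S=K[t_1,\ldots,t_s]$ with each $t_i$ of degree $1$, and let $L\subset S$ be a graded lattice ideal with $\dim S/L=1$. Then there are positive integers $n_1,\ldots,n_{s-1}$ such that (a) $L'=(t_1^{n_1}-t_s^{n_1},\ldots,t_{s-1}^{n_{s-1}}-t_s^{n_{s-1}})\subset L$; (b) ${\rm reg}(S/(t_s,L))\le {\rm reg}(S/(t_s,L'))=\sum_{i=1}^{s-1}(n_i-1)+1$; (c) $H_L(d)=H_L(d-1)=\deg S/L$ for all $d\ge \sum_{i=1}^{s-1}(n_i-1)+1$.
   Context: A lattice is a subgroup $\mathcal{L}$ of $\mathbb{Z}^s$. For $a\in\mathbb{Z}^s$ write $a=a^+-a^-$ with $a^+,a^-\in\mathbb{N}^s$ of disjoint supports, and $t^c=t_1^{c_1}\cdots t_s^{c_s}$. The lattice ideal of $\mathcal{L}$ is $I(\mathcal{L})=(\{t^{a^+}-t^{a^-}: a\in\mathcal{L}\})$; a lattice ideal is an ideal of this form, and it is graded if generated by homogeneous polynomials. For a graded ideal $I\subset S$, $S_d$ denotes the homogeneous polynomials of degree $d$ (with $0$), $I_d=I\cap S_d$, and $H_I(d)=\dim_K S_d/I_d$ is the Hilbert function; the Hilbert polynomial $h_I(t)=c_kt^k+\cdots$ is the unique polynomial with $h_I(d)=H_I(d)$ for $d\gg0$ ($k=-1$ meaning $h_I=0$), and $\dim S/I=k+1$. The degree $\deg S/I$ is $c_k\,k!$ if $k\ge0$ and $\dim_K(S/I)$ if $k=-1$. The index of regularity ${\rm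 reg}(S/I)$ is the least integer $r\ge0$ such that $h_I(d)=H_I(d)$ for all $d\ge r$. *)

theory Defs
  imports "HOL-Library.Poly_Mapping" "HOL-Computational_Algebra.Polynomial"
begin

text \<open>Polynomial ring S = K[t_v : v in 'v] over a field K; the variables are
  indexed by a finite type 'v, so s = CARD('v).\<close>

type_synonym ('v, 'a) mpoly = "('v \<Rightarrow>\<^sub>0 nat) \<Rightarrow>\<^sub>0 'a"

definition var :: "'v \<Rightarrow> ('v, 'a::comm_ring_1) mpoly" where
  "var v = Poly_Mapping.single (Poly_Mapping.single v 1) 1"

definition mono :: "('v::finite \<Rightarrow> nat) \<Rightarrow> ('v, 'a::comm_ring_1) mpoly" where
  "mono c = (\<Prod>v\<in>UNIV. var v ^ c v)"

definition scal :: "'a::comm_ring_1 \<Rightarrow> ('v, 'a) mpoly \<Rightarrow> ('v, 'a) mpoly" where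
  "scal c p = Poly_Mapping.single 0 c * p"

definition mdeg :: "('v \<Rightarrow>\<^sub>0 nat) \<Rightarrow> nat" where
  "mdeg \<alpha> = (\<Sum>v\<in>Poly_Mapping.keys \<alpha>. Poly_Mapping.lookup \<alpha> v)"

definition hom_part :: "nat \<Rightarrow> ('v, 'a::comm_ring_1) mpoly set" where
  "hom_part d = {f. \<forall>\<alpha>\<in>Poly_Mapping.keys f. mdeg \<alpha> = d}"

definition homogeneous :: "('v, 'a::comm_ring_1) mpoly \<Rightarrow> bool" where
  "homogeneous f \<longleftrightarrow> (\<exists>d. f \<in> hom_part d)"

inductive_set ideal_gen :: "'b::comm_ring_1 set \<Rightarrow> 'b set" for G where
  gen: "g \<in> G \<Longrightarrow> g \<in> ideal_gen G"
| zero: "0 \<in> ideal_gen G"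
| add: "f \<in> ideal_gen G \<Longrightarrow> g \<in> ideal_gen G \<Longrightarrow> f + g \<in> ideal_gen G"
| mult: "f \<in> ideal_gen G \<Longrightarrow> r * f \<in> ideal_gen G"

definition is_ideal :: "'b::comm_ring_1 set \<Rightarrow> bool" where
  "is_ideal I \<longleftrightarrow> ideal_gen I = I"

definition graded_ideal :: "('v, 'a::comm_ring_1) mpoly set \<Rightarrow> bool" where
  "graded_ideal I \<longleftrightarrow> (\<exists>G. (\<forall>g\<in>G. homogeneous g) \<and> I = ideal_gen G)"

definition is_lattice :: "('v \<Rightarrow> int) set \<Rightarrow> bool" where
  "is_lattice \<L> \<longleftrightarrow> (\<lambda>_. 0) \<in> \<L> \<and> (\<forall>a\<in>\<L>. \<forall>b\<in>\<L>. (\<lambda>v. a v + b v) \<in> \<L>) \<and> (\<forall>a\<in>\<L>. (\<lambda>v. - a v) \<in> \<L>)"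

definition pos_part :: "('v \<Rightarrow> int) \<Rightarrow> 'v \<Rightarrow> nat" where
  "pos_part a = (\<lambda>v. nat (a v))"

definition neg_part :: "('v \<Rightarrow> int) \<Rightarrow> 'v \<Rightarrow> nat" where
  "neg_part a = (\<lambda>v. nat (- a v))"

definition lattice_ideal_of :: "('v::finite \<Rightarrow> int) set \<Rightarrow> ('v, 'a::comm_ring_1) mpoly set" where
  "lattice_ideal_of \<L> = ideal_gen {mono (pos_part a) - mono (neg_part a) | a. a \<in> \<L>}"

definition is_lattice_ideal :: "('v::finite, 'a::comm_ring_1) mpoly set \<Rightarrow> bool" where
  "is_lattice_ideal I \<longleftrightarrow> (\<exists>\<L>. is_lattice \<L> \<and> I = lattice_ideal_of \<L>)"

text \<open>Hilbert function H_I(d) = dim_K S_d/I_d = dim_K S_d - dim_K I_d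
  (S_d is finite dimensional)\<close>
definition hilbert_fun :: "('v, 'a::field) mpoly set \<Rightarrow> nat \<Rightarrow> nat" where
  "hilbert_fun I d =
     (vector_space.dim scal (hom_part d :: ('v, 'a) mpoly set))
     - (vector_space.dim scal (I \<inter> hom_part d))"

definition hilbert_poly :: "('v, 'a::field) mpoly set \<Rightarrow> real poly" where
  "hilbert_poly I = (THE p. \<forall>\<^sub>F d in sequentially. poly p (real d) = real (hilbert_fun I d))"

text \<open>dim S/I = k + 1 where k = deg h_I (k = -1 when h_I = 0)\<close>
definition quot_dim :: "('v, 'a::field) mpoly set \<Rightarrow> int" where
  "quot_dim I = (if hilbert_poly I = 0 then 0 else int (degree (hilbert_poly I)) + 1)"

definition quot_deg :: "('v, 'a::field) mpoly set \<Rightarrow> real" where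
  "quot_deg I = (if hilbert_poly I = 0 then real (\<Sum>d\<in>{d. hilbert_fun I d \<noteq> 0}. hilbert_fun I d)
                 else lead_coeff (hilbert_poly I) * fact (degree (hilbert_poly I)))"

definition reg_index :: "('v, 'a::field) mpoly set \<Rightarrow> nat" where
  "reg_index I = (LEAST r. \<forall>d\<ge>r. poly (hilbert_poly I) (real d) = real (hilbert_fun I d))"

end

theory Submission
  imports Defs "HOL-Library.Multiset" "HOL-Library.FuncSet" "HOL-Library.Countable"
begin

lemma scal_single: "scal c (Poly_Mapping.single \<alpha> b) = Poly_Mapping.single \<alpha> (c*b)"
  by (simp add: scal_def mult_single)

lemma vs_scal: "vector_space (scal :: 'a::field \<Rightarrow> ('v,'a) mpoly \<Rightarrow> _)"
proof (unfold_locales, goal_cases)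
  case (1 a x y) then show ?case by (simp add: scal_def algebra_simps)
next
  case (2 a b x) then show ?case by (simp add: scal_def algebra_simps single_add)
next
  case (3 a b x) then show ?case by (simp add: scal_def mult.assoc[symmetric] mult_single)
next
  case (4 x) then show ?case by (simp add: scal_def)
qed

interpretation mp: vector_space "scal :: 'a::field \<Rightarrow> ('v,'a) mpoly \<Rightarrow> _"
  by (rule vs_scal)

lemma pm_expand:
  assumes "finite A" "Poly_Mapping.keys f \<subseteq> A"
  shows "f = (\<Sum>\<alpha>\<in>A. Poly_Mapping.single \<alpha> (Poly_Mapping.lookup f \<alpha>))"
proof (rule poly_mapping_eqI)
  fix k
  have "(\<Sum>\<alpha>\<in>A. Poly_Mapping.lookup (Poly_Mapping.single \<alpha> (Poly_Mapping.lookup f \<alpha>)) k)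
      = (\<Sum>\<alpha>\<in>A. if \<alpha> = k then Poly_Mapping.lookup f \<alpha> else 0)"
    by (rule sum.cong) (auto simp: lookup_single when_def)
  also have "\<dots> = Poly_Mapping.lookup f k"
    using assms by (auto simp: sum.delta in_keys_iff)
  finally show "Poly_Mapping.lookup f k = Poly_Mapping.lookup (\<Sum>\<alpha>\<in>A. Poly_Mapping.single \<alpha> (Poly_Mapping.lookup f \<alpha>)) k"
    by (simp add: lookup_sum)
qed

definition Phi :: "(('v \<Rightarrow>\<^sub>0 nat) \<Rightarrow> 'a) \<Rightarrow> ('v,'a::comm_ring_1) mpoly \<Rightarrow> 'a" where
  "Phi h f = (\<Sum>\<alpha>\<in>Poly_Mapping.keys f. Poly_Mapping.lookup f \<alpha> * h \<alpha>)"

lemma Phi_superset: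
  assumes "finite A" "Poly_Mapping.keys f \<subseteq> A"
  shows "Phi h f = (\<Sum>\<alpha>\<in>A. Poly_Mapping.lookup f \<alpha> * h \<alpha>)"
  unfolding Phi_def using assms
  by (intro sum.mono_neutral_left) (auto simp: in_keys_iff)

lemma Phi_add: "Phi h (f + g) = Phi h f + Phi h g"
proof -
  define A where "A = Poly_Mapping.keys f \<union> Poly_Mapping.keys g"
  have fA: "finite A" by (simp add: A_def)
  have "Phi h (f+g) = (\<Sum>\<alpha>\<in>A. Poly_Mapping.lookup (f+g) \<alpha> * h \<alpha>)"
    using keys_add[of f g] by (intro Phi_superset fA) (auto simp: A_def)
  also have "\<dots> = (\<Sum>\<alpha>\<in>A. Poly_Mapping.lookup f \<alpha> * h \<alpha>) + (\<Sum>\<alpha>\<in>A. Poly_Mapping.lookup g \<alpha> * h \<alpha>)"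
    by (simp add: lookup_add algebra_simps sum.distrib)
  also have "\<dots> = Phi h f + Phi h g"
    by (subst (1 2) Phi_superset[OF fA]) (auto simp: A_def)
  finally show ?thesis .
qed

lemma Phi_zero[simp]: "Phi h 0 = 0" by (simp add: Phi_def)

lemma Phi_uminus: "Phi h (- f) = - Phi h f"
  using Phi_add[of h f "-f"] by (simp add: eq_neg_iff_add_eq_0 add.commute)

lemma Phi_diff: "Phi h (f - g) = Phi h f - Phi h g"
  using Phi_add[of h f "-g"] Phi_uminus[of h g] by simp

lemma Phi_sum: "Phi h (\<Sum>i\<in>I. p i) = (\<Sum>i\<in>I. Phi h (p i))"
  by (induction I rule: infinite_finite_induct) (auto simp: Phi_add)

lemma Phi_single: "Phi h (Poly_Mapping.single \<alpha> c) = c * h \<alpha>"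
  by (simp add: Phi_def)

lemma mult_expand:
  "(r::('v,'a::comm_ring_1) mpoly) * f = (\<Sum>\<beta>\<in>Poly_Mapping.keys r. \<Sum>\<gamma>\<in>Poly_Mapping.keys f.
      Poly_Mapping.single (\<beta>+\<gamma>) (Poly_Mapping.lookup r \<beta> * Poly_Mapping.lookup f \<gamma>))"
proof -
  have "r * f = (\<Sum>\<beta>\<in>Poly_Mapping.keys r. Poly_Mapping.single \<beta> (Poly_Mapping.lookup r \<beta>)) *
       (\<Sum>\<gamma>\<in>Poly_Mapping.keys f. Poly_Mapping.single \<gamma> (Poly_Mapping.lookup f \<gamma>))"
    by (subst (1) pm_expand[of "Poly_Mapping.keys r" r], simp, simp,
        subst (1) pm_expand[of "Poly_Mapping.keys f" f], simp_all)
  also have "\<dots> = (\<Sum>\<beta>\<in>Poly_Mapping.keys r. \<Sum>\<gamma>\<in>Poly_Mapping.keys f.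
      Poly_Mapping.single (\<beta>+\<gamma>) (Poly_Mapping.lookup r \<beta> * Poly_Mapping.lookup f \<gamma>))"
    by (simp add: sum_product mult_single)
  finally show ?thesis .
qed

lemma Phi_mult:
  "Phi h (r * f) = (\<Sum>\<beta>\<in>Poly_Mapping.keys r. Poly_Mapping.lookup r \<beta> * Phi (\<lambda>\<alpha>. h (\<beta>+\<alpha>)) f)"
  by (subst mult_expand) (simp add: Phi_sum Phi_single Phi_def[of _ f] sum_distrib_left mult.assoc)

lemma ideal_gen_closed:
  assumes "0 \<in> C" "\<And>f g. f \<in> C \<Longrightarrow> g \<in> C \<Longrightarrow> f + g \<in> C" "\<And>f r. f \<in> C \<Longrightarrow> r * f \<in> C" "X \<subseteq> C"
  shows "ideal_gen X \<subseteq> C"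
proof
  fix f assume "f \<in> ideal_gen X"
  then show "f \<in> C" by induction (use assms in auto)
qed

lemma Phi_ideal:
  assumes shift: "\<And>h \<beta>. h \<in> H \<Longrightarrow> (\<lambda>\<alpha>. h (\<beta>+\<alpha>)) \<in> H"
    and gens: "\<And>g h. g \<in> X \<Longrightarrow> h \<in> H \<Longrightarrow> Phi h g = 0"
    and f: "f \<in> ideal_gen X" and h: "h \<in> H"
  shows "Phi h (f :: ('v,'a::comm_ring_1) mpoly) = 0"
proof -
  have "ideal_gen X \<subseteq> {f. \<forall>h\<in>H. Phi h f = 0}"
    by (rule ideal_gen_closed) (auto simp: Phi_add Phi_mult shift gens)
  then show ?thesis using f h by auto
qed

lemma ideal_gen_mono: "X \<subseteq> Y \<Longrightarrow> ideal_gen X \<subseteq> ideal_gen Y"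
  by (rule ideal_gen_closed) (auto intro: ideal_gen.intros)

lemma ideal_gen_sub: "X \<subseteq> ideal_gen Y \<Longrightarrow> ideal_gen X \<subseteq> ideal_gen Y"
  by (rule ideal_gen_closed) (auto intro: ideal_gen.intros)

lemma ideal_gen_incl: "X \<subseteq> ideal_gen X"
  by (auto intro: ideal_gen.intros)

lemma ideal_gen_uminus: "f \<in> ideal_gen X \<Longrightarrow> - f \<in> ideal_gen X"
  using ideal_gen.mult[of f X "-1"] by simp

lemma ideal_gen_diff: "f \<in> ideal_gen X \<Longrightarrow> g \<in> ideal_gen X \<Longrightarrow> f - g \<in> ideal_gen X"
  using ideal_gen.add[OF _ ideal_gen_uminus, of f X g] by simp

lemma ideal_gen_sum: "(\<And>i. i \<in> I \<Longrightarrow> p i \<in> ideal_gen X) \<Longrightarrow> (\<Sum>i\<in>I. p i) \<in> ideal_gen X"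
  by (induction I rule: infinite_finite_induct) (auto intro: ideal_gen.intros)

lemma lookup_scal: "Poly_Mapping.lookup (scal c p) \<alpha> = c * Poly_Mapping.lookup p \<alpha>"
  by (simp add: scal_def mult_map_scale_conv_mult[symmetric] map.rep_eq when_def)

lemma single1_inj: "Poly_Mapping.single x (1::'a::zero_neq_one) = Poly_Mapping.single y 1 \<longleftrightarrow> x = y"
  by (metis lookup_single_eq lookup_single_not_eq zero_neq_one)


lemma mdeg_UNIV: "mdeg (\<alpha> :: 'v::finite \<Rightarrow>\<^sub>0 nat) = (\<Sum>v\<in>UNIV. Poly_Mapping.lookup \<alpha> v)"
  unfolding mdeg_def by (intro sum.mono_neutral_left) (auto simp: in_keys_iff)

lemma mdeg_add: "mdeg (\<alpha> + \<beta> :: 'v::finite \<Rightarrow>\<^sub>0 nat) = mdeg \<alpha> + mdeg \<beta>"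
  by (simp add: mdeg_UNIV lookup_add sum.distrib)

lemma mdeg_zero[simp]: "mdeg 0 = 0" by (simp add: mdeg_def)

lemma mdeg_single[simp]: "mdeg (Poly_Mapping.single (v::'v::finite) k) = k"
  by (simp add: mdeg_def)

lemma lookup_le_mdeg: "Poly_Mapping.lookup \<alpha> v \<le> mdeg (\<alpha> :: 'v::finite \<Rightarrow>\<^sub>0 nat)"
  unfolding mdeg_UNIV by (rule member_le_sum) auto

definition Pd :: "nat \<Rightarrow> ('v \<Rightarrow>\<^sub>0 nat) set" where
  "Pd d = {\<alpha>. mdeg \<alpha> = d}"

lemma finite_Pd: "finite (Pd d :: ('v::finite \<Rightarrow>\<^sub>0 nat) set)"
proof -
  have "finite {c::'v\<Rightarrow>nat. \<forall>v. c v \<le> d}"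
    by (rule finite_subset[OF _ finite_PiE[of UNIV "\<lambda>_. {..d}"]]) (auto simp: PiE_def extensional_def)
  then have "finite (Abs_poly_mapping ` {c::'v\<Rightarrow>nat. \<forall>v. c v \<le> d})" by simp
  moreover have "Pd d \<subseteq> Abs_poly_mapping ` {c::'v\<Rightarrow>nat. \<forall>v. c v \<le> d}"
  proof
    fix \<alpha> :: "'v \<Rightarrow>\<^sub>0 nat" assume "\<alpha> \<in> Pd d"
    then have "\<forall>v. Poly_Mapping.lookup \<alpha> v \<le> d" using lookup_le_mdeg[of \<alpha>] by (auto simp: Pd_def)
    then show "\<alpha> \<in> Abs_poly_mapping ` {c::'v\<Rightarrow>nat. \<forall>v. c v \<le> d}"
      by (intro image_eqI[of _ _ "Poly_Mapping.lookup \<alpha>"]) (auto simp: lookup_inverse)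
  qed
  ultimately show ?thesis by (rule finite_subset[rotated])
qed

lemma var_power: "var v ^ k = Poly_Mapping.single (Poly_Mapping.single v k) (1::'a::comm_ring_1)"
  by (induction k) (simp_all add: var_def mult_single single_add[symmetric])

lemma prod_single1: "(\<Prod>i\<in>I. Poly_Mapping.single (a i) (1::'a::comm_ring_1)) = Poly_Mapping.single (\<Sum>i\<in>I. a i) 1"
  by (induction I rule: infinite_finite_induct) (simp_all add: mult_single)

lemma Abs_sum_single: "(\<Sum>v\<in>UNIV. Poly_Mapping.single v (c v)) = Abs_poly_mapping (c :: 'v::finite \<Rightarrow> nat)"
proof (rule poly_mapping_eqI)
  fix k
  have "(\<Sum>v\<in>UNIV. Poly_Mapping.lookup (Poly_Mapping.single v (c v)) k) = (\<Sum>v\<in>UNIV. if v = k then c v else 0)"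
    by (rule sum.cong) (auto simp: lookup_single when_def)
  then show "Poly_Mapping.lookup (\<Sum>v\<in>UNIV. Poly_Mapping.single v (c v)) k = Poly_Mapping.lookup (Abs_poly_mapping c) k"
    by (simp add: lookup_sum)
qed

lemma mono_single: "(mono c :: ('v::finite,'a::comm_ring_1) mpoly) = Poly_Mapping.single (Abs_poly_mapping c) 1"
  by (simp add: mono_def var_power prod_single1 Abs_sum_single)

lemma lookup_Abs_fin[simp]: "Poly_Mapping.lookup (Abs_poly_mapping (c :: 'v::finite \<Rightarrow> 'b::zero)) = c"
  by simp

lemma triangular_indep:
  fixes b :: "('v \<Rightarrow>\<^sub>0 nat) \<Rightarrow> ('v,'a::field) mpoly"
  assumes fin: "finite A" and inj: "inj_on b A"
    and tri: "\<And>\<alpha> \<beta>. \<alpha> \<in> A \<Longrightarrow> \<beta> \<in> A \<Longrightarrow> Poly_Mapping.lookup (b \<beta>) \<alpha> = (if \<alpha> = \<beta> then 1 else 0)"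
  shows "mp.independent (b ` A)"
proof (rule mp.independent_if_scalars_zero)
  show "finite (b ` A)" using fin by simp
  fix u x assume sum0: "(\<Sum>x\<in>b ` A. scal (u x) x) = 0" and x: "x \<in> b ` A"
  then obtain \<alpha> where \<alpha>: "\<alpha> \<in> A" "x = b \<alpha>" by auto
  have "0 = Poly_Mapping.lookup (\<Sum>x\<in>b ` A. scal (u x) x) \<alpha>" using sum0 by simp
  also have "\<dots> = (\<Sum>\<beta>\<in>A. Poly_Mapping.lookup (scal (u (b \<beta>)) (b \<beta>)) \<alpha>)"
    by (simp add: sum.reindex[OF inj] lookup_sum)
  also have "\<dots> = (\<Sum>\<beta>\<in>A. if \<beta> = \<alpha> then u (b \<beta>) else 0)"
  proof (rule sum.cong)
    fix \<beta> assume "\<beta> \<in> A"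
    have "Poly_Mapping.lookup (scal (u (b \<beta>)) (b \<beta>)) \<alpha> = u (b \<beta>) * Poly_Mapping.lookup (b \<beta>) \<alpha>"
      by (simp add: lookup_scal)
    then show "Poly_Mapping.lookup (scal (u (b \<beta>)) (b \<beta>)) \<alpha> = (if \<beta> = \<alpha> then u (b \<beta>) else 0)"
      using tri[OF \<alpha>(1) \<open>\<beta> \<in> A\<close>] by auto
  qed simp
  also have "\<dots> = u x" using \<alpha> fin by (simp add: sum.delta')
  finally show "u x = 0" by simp
qed

lemma dim_monos:
  assumes "finite A"
  shows "mp.dim {f :: ('v,'a::field) mpoly. Poly_Mapping.keys f \<subseteq> A} = card A"
proof -
  let ?b = "\<lambda>\<alpha>. Poly_Mapping.single \<alpha> (1::'a) :: ('v,'a) mpoly"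
  have inj: "inj_on ?b A" by (auto simp: inj_on_def single1_inj)
  have "mp.dim {f :: ('v,'a::field) mpoly. Poly_Mapping.keys f \<subseteq> A} = card (?b ` A)"
  proof (rule mp.dim_unique[OF _ _ triangular_indep[OF assms inj] refl])
    show "?b ` A \<subseteq> {f. Poly_Mapping.keys f \<subseteq> A}" by auto
    show "{f. Poly_Mapping.keys f \<subseteq> A} \<subseteq> mp.span (?b ` A)"
    proof
      fix f :: "('v,'a) mpoly" assume "f \<in> {f. Poly_Mapping.keys f \<subseteq> A}"
      then have "f = (\<Sum>\<alpha>\<in>A. scal (Poly_Mapping.lookup f \<alpha>) (?b \<alpha>))"
        using pm_expand[OF assms, of f] by (simp add: scal_single)
      also have "\<dots> \<in> mp.span (?b ` A)"
        by (intro mp.span_sum mp.span_scale mp.span_base) auto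
      finally show "f \<in> mp.span (?b ` A)" .
    qed
  qed (auto simp: lookup_single when_def)
  then show ?thesis using card_image[OF inj] by simp
qed

lemma hom_part_keys: "hom_part d = {f. Poly_Mapping.keys f \<subseteq> Pd d}"
  by (auto simp: hom_part_def Pd_def)

lemma dim_hom_part: "mp.dim (hom_part d :: ('v::finite,'a::field) mpoly set) = card (Pd d :: ('v \<Rightarrow>\<^sub>0 nat) set)"
  by (simp add: hom_part_keys dim_monos finite_Pd)

definition encd :: "('v::finite \<Rightarrow>\<^sub>0 nat) \<Rightarrow> (nat \<Rightarrow>\<^sub>0 nat)" where
  "encd \<alpha> = Abs_poly_mapping (\<lambda>i. if i \<in> to_nat ` (UNIV :: 'v set) then Poly_Mapping.lookup \<alpha> (from_nat i) else 0)"

lemma lookup_enc: "Poly_Mapping.lookup (encd (\<alpha>::'v::finite \<Rightarrow>\<^sub>0 nat)) i = (if i \<in> to_nat ` (UNIV :: 'v set) then Poly_Mapping.lookup \<alpha> (from_nat i) else 0)"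
proof -
  have "finite {i. (if i \<in> to_nat ` (UNIV :: 'v set) then Poly_Mapping.lookup \<alpha> (from_nat i) else 0) \<noteq> 0}"
    by (rule finite_subset[of _ "to_nat ` (UNIV :: 'v set)"]) auto
  then show ?thesis unfolding encd_def by simp
qed

lemma encd_add: "encd (\<alpha> + \<beta>) = encd \<alpha> + encd \<beta>"
  by (rule poly_mapping_eqI) (simp add: lookup_enc lookup_add)

lemma encd_inj: fixes \<alpha> \<beta> :: "'v::finite \<Rightarrow>\<^sub>0 nat" shows "encd \<alpha> = encd \<beta> \<Longrightarrow> \<alpha> = \<beta>"
proof (rule poly_mapping_eqI)
  fix v :: 'v assume "encd \<alpha> = encd \<beta>"
  then have "Poly_Mapping.lookup (encd \<alpha>) (to_nat v) = Poly_Mapping.lookup (encd \<beta>) (to_nat v)" by simp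
  then show "Poly_Mapping.lookup \<alpha> v = Poly_Mapping.lookup \<beta> v" by (simp add: lookup_enc)
qed

lemma encd_less_add: "encd (\<alpha> + \<gamma>) < encd (\<beta> + \<gamma>) \<longleftrightarrow> encd \<alpha> < encd \<beta>"
  by (simp add: encd_add)

locale lat =
  fixes Lt :: "('v::finite \<Rightarrow> int) set"
  assumes lat: "is_lattice Lt"
begin

lemma L0: "(\<lambda>_. 0) \<in> Lt" using lat by (simp add: is_lattice_def)
lemma Ladd: "a \<in> Lt \<Longrightarrow> b \<in> Lt \<Longrightarrow> (\<lambda>v. a v + b v) \<in> Lt" using lat by (simp add: is_lattice_def)
lemma Lneg: "a \<in> Lt \<Longrightarrow> (\<lambda>v. - a v) \<in> Lt" using lat by (simp add: is_lattice_def)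
lemma Ldiff: "a \<in> Lt \<Longrightarrow> b \<in> Lt \<Longrightarrow> (\<lambda>v. a v - b v) \<in> Lt"
  using Ladd[OF _ Lneg[of b]] by simp

lemma Lmult: "a \<in> Lt \<Longrightarrow> (\<lambda>v. int k * a v) \<in> Lt"
proof (induction k)
  case 0 then show ?case using L0 by simp
next
  case (Suc k)
  then show ?case using Ladd[OF Suc.IH Suc.prems] by (simp add: algebra_simps)
qed

lemma Lmult_int: "a \<in> Lt \<Longrightarrow> (\<lambda>v. k * a v) \<in> Lt"
proof (cases "k \<ge> 0")
  case True
  assume a: "a \<in> Lt"
  from Lmult[OF a, of "nat k"] True show ?thesis by simp
next
  case False
  assume a: "a \<in> Lt"
  from Lneg[OF Lmult[OF a, of "nat (-k)"]] False show ?thesis by simp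
qed

lemma Lsum: "(\<And>i. i \<in> I \<Longrightarrow> a i \<in> Lt) \<Longrightarrow> (\<lambda>v. \<Sum>i\<in>I. a i v) \<in> Lt"
proof (induction I rule: infinite_finite_induct)
  case (infinite A) then show ?case using L0 by simp
next
  case empty then show ?case using L0 by simp
next
  case (insert x F)
  then show ?case using Ladd[of "a x" "\<lambda>v. \<Sum>i\<in>F. a i v"] by simp
qed

definition rel :: "('v \<Rightarrow>\<^sub>0 nat) \<Rightarrow> ('v \<Rightarrow>\<^sub>0 nat) \<Rightarrow> bool" where
  "rel \<alpha> \<beta> \<longleftrightarrow> (\<lambda>v. int (Poly_Mapping.lookup \<alpha> v) - int (Poly_Mapping.lookup \<beta> v)) \<in> Lt"

lemma rel_refl: "rel \<alpha> \<alpha>" using L0 by (simp add: rel_def)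
lemma rel_sym: "rel \<alpha> \<beta> \<Longrightarrow> rel \<beta> \<alpha>"
  unfolding rel_def by (drule Lneg) simp
lemma rel_trans: "rel \<alpha> \<beta> \<Longrightarrow> rel \<beta> \<gamma> \<Longrightarrow> rel \<alpha> \<gamma>"
  unfolding rel_def by (drule (1) Ladd) simp
lemma rel_shift: "rel (\<alpha> + \<gamma>) (\<beta> + \<gamma>) \<longleftrightarrow> rel \<alpha> \<beta>"
  by (simp add: rel_def lookup_add)

definition grp :: "('v \<Rightarrow>\<^sub>0 nat) \<Rightarrow> ('v \<Rightarrow>\<^sub>0 nat) set" where
  "grp \<alpha> = {\<beta>. mdeg \<beta> = mdeg \<alpha> \<and> rel \<beta> \<alpha>}"

lemma grp_finite: "finite (grp \<alpha>)"
  by (rule finite_subset[OF _ finite_Pd[of "mdeg \<alpha>"]]) (auto simp: grp_def Pd_def)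

lemma grp_self: "\<alpha> \<in> grp \<alpha>" by (simp add: grp_def rel_refl)

lemma grp_eq: "\<beta> \<in> grp \<alpha> \<Longrightarrow> grp \<beta> = grp \<alpha>"
  unfolding grp_def by (auto intro: rel_trans rel_sym)

definition std :: "('v \<Rightarrow>\<^sub>0 nat) \<Rightarrow> ('v \<Rightarrow>\<^sub>0 nat)" where
  "std \<alpha> = inv_into (grp \<alpha>) encd (Min (encd ` grp \<alpha>))"

lemma std_props: "std \<alpha> \<in> grp \<alpha> \<and> (\<forall>\<beta>\<in>grp \<alpha>. encd (std \<alpha>) \<le> encd \<beta>)"
proof -
  have ne: "encd ` grp \<alpha> \<noteq> {}" using grp_self by auto
  have M: "Min (encd ` grp \<alpha>) \<in> encd ` grp \<alpha>" using Min_in[OF _ ne] grp_finite by simp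
  have inj: "inj_on encd (grp \<alpha>)" by (auto simp: inj_on_def intro: encd_inj)
  have 1: "std \<alpha> \<in> grp \<alpha>" unfolding std_def using M by (rule inv_into_into)
  have 2: "encd (std \<alpha>) = Min (encd ` grp \<alpha>)" unfolding std_def using M by (simp add: f_inv_into_f)
  show ?thesis using 1 2 grp_finite by auto
qed

lemma std_in: "std \<alpha> \<in> grp \<alpha>" using std_props by blast
lemma std_le: "\<beta> \<in> grp \<alpha> \<Longrightarrow> encd (std \<alpha>) \<le> encd \<beta>" using std_props by blast

lemma std_cong: "\<beta> \<in> grp \<alpha> \<Longrightarrow> std \<beta> = std \<alpha>"
  unfolding std_def by (simp add: grp_eq)

lemma std_std: "std (std \<alpha>) = std \<alpha>" by (rule std_cong[OF std_in])

lemma std_unique: "\<beta> \<in> grp \<alpha> \<Longrightarrow> std \<beta> = \<beta> \<Longrightarrow> std \<alpha> = \<beta>"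
  using std_cong by metis

definition E :: "('v \<Rightarrow>\<^sub>0 nat) set" where "E = {\<alpha>. std \<alpha> \<noteq> \<alpha>}"

lemma std_notin_E: "std \<alpha> \<notin> E" by (simp add: E_def std_std)

lemma std_deg: "mdeg (std \<alpha>) = mdeg \<alpha>" using std_in by (simp add: grp_def)
lemma std_rel: "rel (std \<alpha>) \<alpha>" using std_in by (simp add: grp_def)

lemma E_less: "\<alpha> \<in> E \<Longrightarrow> encd (std \<alpha>) < encd \<alpha>"
  using std_le[OF grp_self, of \<alpha>] encd_inj[of "std \<alpha>" \<alpha>] by (force simp: E_def)

lemma E_up: assumes "\<alpha> \<in> E" shows "\<alpha> + \<gamma> \<in> E"
proof -
  have "std \<alpha> + \<gamma> \<in> grp (\<alpha> + \<gamma>)"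
    using std_in[of \<alpha>] by (simp add: grp_def mdeg_add rel_shift)
  then have "encd (std (\<alpha>+\<gamma>)) \<le> encd (std \<alpha> + \<gamma>)" by (rule std_le)
  also have "\<dots> < encd (\<alpha> + \<gamma>)" using E_less[OF assms] by (simp add: encd_less_add)
  finally show ?thesis by (auto simp: E_def)
qed

end

locale latid = lat Lt for Lt :: "('v::finite \<Rightarrow> int) set" +
  fixes L :: "('v,'a::field) mpoly set"
  assumes L_def: "L = lattice_ideal_of Lt"
    and graded: "graded_ideal L"
begin

definition hcls :: "('v \<Rightarrow> int) \<Rightarrow> ('v \<Rightarrow>\<^sub>0 nat) \<Rightarrow> 'a" where
  "hcls x \<alpha> = (if (\<lambda>v. int (Poly_Mapping.lookup \<alpha> v) - x v) \<in> Lt then 1 else 0)"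

definition hcd :: "('v \<Rightarrow> int) \<Rightarrow> int \<Rightarrow> ('v \<Rightarrow>\<^sub>0 nat) \<Rightarrow> 'a" where
  "hcd x d \<alpha> = (if (\<lambda>v. int (Poly_Mapping.lookup \<alpha> v) - x v) \<in> Lt \<and> int (mdeg \<alpha>) = d then 1 else 0)"

lemma hcls_shift: "(\<lambda>\<alpha>. hcls x (\<beta> + \<alpha>)) = hcls (\<lambda>v. x v - int (Poly_Mapping.lookup \<beta> v))"
proof -
  have eq: "\<And>\<alpha>. (\<lambda>v. int (Poly_Mapping.lookup (\<beta> + \<alpha>) v) - x v) = (\<lambda>v. int (Poly_Mapping.lookup \<alpha> v) - (x v - int (Poly_Mapping.lookup \<beta> v)))"
    by (rule ext) (simp add: lookup_add)
  show ?thesis unfolding hcls_def by (rule ext) (simp only: eq)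
qed

lemma hcd_shift: "(\<lambda>\<alpha>. hcd x d (\<beta> + \<alpha>)) = hcd (\<lambda>v. x v - int (Poly_Mapping.lookup \<beta> v)) (d - int (mdeg \<beta>))"
proof -
  have eq: "\<And>\<alpha>. (\<lambda>v. int (Poly_Mapping.lookup (\<beta> + \<alpha>) v) - x v) = (\<lambda>v. int (Poly_Mapping.lookup \<alpha> v) - (x v - int (Poly_Mapping.lookup \<beta> v)))"
    by (rule ext) (simp add: lookup_add)
  show ?thesis unfolding hcd_def by (rule ext) (simp only: eq mdeg_add, simp)
qed

lemma gen_cls:
  assumes a: "a \<in> Lt"
  shows "Phi (hcls x) (mono (pos_part a) - mono (neg_part a) :: ('v,'a) mpoly) = 0"
proof -
  have eq: "(\<lambda>v. int (nat (- a v)) - x v) = (\<lambda>v. (int (nat (a v)) - x v) - a v)" by auto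
  have "(\<lambda>v. int (nat (a v)) - x v) \<in> Lt \<longleftrightarrow> (\<lambda>v. int (nat (- a v)) - x v) \<in> Lt"
  proof
    assume "(\<lambda>v. int (nat (a v)) - x v) \<in> Lt"
    then show "(\<lambda>v. int (nat (- a v)) - x v) \<in> Lt" unfolding eq by (rule Ldiff[OF _ a])
  next
    have eq2: "(\<lambda>v. int (nat (a v)) - x v) = (\<lambda>v. (int (nat (- a v)) - x v) + a v)" by auto
    assume h: "(\<lambda>v. int (nat (- a v)) - x v) \<in> Lt"
    from Ladd[OF h a] show "(\<lambda>v. int (nat (a v)) - x v) \<in> Lt" unfolding eq2 .
  qed
  then show ?thesis
    by (simp add: mono_single Phi_diff Phi_single hcls_def pos_part_def neg_part_def)
qed

lemma L_ideal: "L = ideal_gen {mono (pos_part a) - mono (neg_part a) | a. a \<in> Lt}"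
  by (simp add: L_def lattice_ideal_of_def)

lemma L_cls: "f \<in> L \<Longrightarrow> Phi (hcls x) f = 0"
  unfolding L_ideal
proof (rule Phi_ideal[where H = "range hcls"])
  fix h \<beta> assume "h \<in> range hcls"
  then obtain x' where h: "h = hcls x'" by auto
  show "(\<lambda>\<alpha>. h (\<beta>+\<alpha>)) \<in> range hcls" unfolding h hcls_shift by (rule rangeI)
next
  fix g :: "('v,'a) mpoly" and h assume "g \<in> {mono (pos_part a) - mono (neg_part a) | a. a \<in> Lt}" "h \<in> range hcls"
  then show "Phi h g = 0" using gen_cls by auto
qed auto

lemma L_cd: assumes f: "f \<in> L" shows "Phi (hcd x d) f = 0"
proof -
  obtain G where G1: "\<forall>g\<in>G. homogeneous g" and G2: "L = ideal_gen G"
    using graded unfolding graded_ideal_def by blast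
  have gens: "Phi h g = 0" if g: "g \<in> G" and h: "h \<in> range (\<lambda>(x,d). hcd x d)" for g h
  proof -
    obtain x d where hx: "h = hcd x d" using h by auto
    have "homogeneous g" using G1 g by blast
    then obtain e where e: "\<And>\<alpha>. \<alpha> \<in> Poly_Mapping.keys g \<Longrightarrow> mdeg \<alpha> = e"
      unfolding homogeneous_def hom_part_def by blast
    have gL: "g \<in> L" unfolding G2 using g by (rule ideal_gen.gen)
    show ?thesis
    proof (cases "int e = d")
      case True
      have "hcd x d \<alpha> = hcls x \<alpha>" if "\<alpha> \<in> Poly_Mapping.keys g" for \<alpha>
        unfolding hcd_def hcls_def using e[OF that] True by simp
      then have "Phi (hcd x d) g = Phi (hcls x) g" unfolding Phi_def by (intro sum.cong refl) simp
      then show ?thesis using L_cls[OF gL] hx by simp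
    next
      case False
      have "hcd x d \<alpha> = 0" if "\<alpha> \<in> Poly_Mapping.keys g" for \<alpha>
        unfolding hcd_def using e[OF that] False by simp
      then have "Phi (hcd x d) g = 0" unfolding Phi_def by (intro sum.neutral) simp
      then show ?thesis using hx by simp
    qed
  qed
  have shift: "(\<lambda>\<alpha>. h (\<beta>+\<alpha>)) \<in> range (\<lambda>(x,d). hcd x d)" if hr: "h \<in> range (\<lambda>(x,d). hcd x d)" for h \<beta>
  proof -
    obtain p where "h = (\<lambda>(x,d). hcd x d) p" using hr by blast
    then obtain x' d' where h: "h = hcd x' d'" by (cases p) auto
    show ?thesis unfolding h hcd_shift
      by (rule image_eqI[of _ _ "((\<lambda>v. x' v - int (Poly_Mapping.lookup \<beta> v)), d' - int (mdeg \<beta>))"]) simp_all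
  qed
  have fG: "f \<in> ideal_gen G" using f G2 by simp
  have hm: "hcd x d \<in> range (\<lambda>(x,d). hcd x d)"
    by (rule image_eqI[of _ _ "(x, d)"]) simp_all
  show ?thesis by (rule Phi_ideal[OF shift gens fG hm])
qed

lemma binom_in_L:
  assumes r: "rel \<alpha> \<beta>"
  shows "Poly_Mapping.single \<alpha> 1 - Poly_Mapping.single \<beta> 1 \<in> L"
proof -
  define a where "a = (\<lambda>v. int (Poly_Mapping.lookup \<alpha> v) - int (Poly_Mapping.lookup \<beta> v))"
  have a: "a \<in> Lt" using r by (simp add: rel_def a_def)
  define \<mu> where "\<mu> = Abs_poly_mapping (\<lambda>v. min (Poly_Mapping.lookup \<alpha> v) (Poly_Mapping.lookup \<beta> v))"
  have \<alpha>: "\<alpha> = \<mu> + Abs_poly_mapping (pos_part a)"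
    by (rule poly_mapping_eqI) (simp add: \<mu>_def lookup_add pos_part_def a_def)
  have \<beta>: "\<beta> = \<mu> + Abs_poly_mapping (neg_part a)"
    by (rule poly_mapping_eqI) (simp add: \<mu>_def lookup_add neg_part_def a_def)
  have "Poly_Mapping.single \<alpha> 1 - Poly_Mapping.single \<beta> 1
     = Poly_Mapping.single \<mu> 1 * (mono (pos_part a) - mono (neg_part a) :: ('v,'a) mpoly)"
    by (subst \<alpha>, subst \<beta>) (simp add: mono_single mult_single algebra_simps)
  also have "\<dots> \<in> L" unfolding L_ideal
    by (rule ideal_gen.mult, rule ideal_gen.gen) (use a in auto)
  finally show ?thesis .
qed

lemma L_is_ideal: "ideal_gen L = L"
  unfolding L_ideal by (rule antisym[OF ideal_gen_sub[OF order_refl] ideal_gen_incl])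

lemma L_add: "f \<in> L \<Longrightarrow> g \<in> L \<Longrightarrow> f + g \<in> L"
  unfolding L_ideal by (rule ideal_gen.add)
lemma L_mult: "f \<in> L \<Longrightarrow> r * f \<in> L"
  unfolding L_ideal by (rule ideal_gen.mult)
lemma L_diff: "f \<in> L \<Longrightarrow> g \<in> L \<Longrightarrow> f - g \<in> L"
  unfolding L_ideal by (rule ideal_gen_diff)
lemma L_sum: "(\<And>i. i \<in> I \<Longrightarrow> p i \<in> L) \<Longrightarrow> (\<Sum>i\<in>I. p i) \<in> L"
  unfolding L_ideal by (rule ideal_gen_sum)

lemma std_pts_zero:
  assumes g: "g \<in> L" and keys: "Poly_Mapping.keys g \<subseteq> Pd d - E"
  shows "g = 0"
proof (rule ccontr)
  assume "g \<noteq> 0"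
  then obtain \<alpha> where \<alpha>: "\<alpha> \<in> Poly_Mapping.keys g" by fastforce
  let ?x = "\<lambda>v. int (Poly_Mapping.lookup \<alpha> v)"
  have "Phi (hcd ?x (int d)) g = (\<Sum>\<beta>\<in>Poly_Mapping.keys g. if \<beta> = \<alpha> then Poly_Mapping.lookup g \<beta> else 0)"
    unfolding Phi_def
  proof (rule sum.cong[OF refl])
    fix \<beta> assume \<beta>: "\<beta> \<in> Poly_Mapping.keys g"
    show "Poly_Mapping.lookup g \<beta> * hcd ?x (int d) \<beta> = (if \<beta> = \<alpha> then Poly_Mapping.lookup g \<beta> else 0)"
    proof (cases "\<beta> = \<alpha>")
      case True
      then show ?thesis using keys \<alpha> L0 by (auto simp: hcd_def Pd_def)
    next
      case False
      have "\<not> (rel \<beta> \<alpha> \<and> mdeg \<beta> = d)"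
      proof
        assume h: "rel \<beta> \<alpha> \<and> mdeg \<beta> = d"
        have sb: "std \<beta> = \<beta>" and sa: "std \<alpha> = \<alpha>" and da: "mdeg \<alpha> = d"
          using keys \<alpha> \<beta> by (auto simp: E_def Pd_def)
        have "\<beta> \<in> grp \<alpha>" using h da by (simp add: grp_def)
        from std_unique[OF this sb] sa False show False by simp
      qed
      then show ?thesis using False by (auto simp: hcd_def rel_def)
    qed
  qed
  also have "\<dots> = Poly_Mapping.lookup g \<alpha>" using \<alpha> by (simp add: sum.delta)
  finally have "Poly_Mapping.lookup g \<alpha> = 0" using L_cd[OF g] by simp
  then show False using \<alpha> by (simp add: in_keys_iff)
qed

lemma dim_L: "mp.dim (L \<inter> hom_part d) = card (Pd d \<inter> E)"
proof -
  define A where "A = Pd d \<inter> E"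
  define b where "b \<alpha> = Poly_Mapping.single \<alpha> (1::'a) - Poly_Mapping.single (std \<alpha>) 1" for \<alpha>
  have finA: "finite A" unfolding A_def by (rule finite_Int) (simp add: finite_Pd)
  have tri: "Poly_Mapping.lookup (b \<beta>) \<alpha> = (if \<alpha> = \<beta> then 1 else 0)" if "\<alpha> \<in> A" "\<beta> \<in> A" for \<alpha> \<beta>
  proof -
    have "std \<beta> \<noteq> \<alpha>" using that std_notin_E[of \<beta>] by (auto simp: A_def)
    then show ?thesis by (auto simp: b_def lookup_minus lookup_single when_def)
  qed
  have inj: "inj_on b A"
  proof (rule inj_onI)
    fix \<alpha> \<beta> assume "\<alpha> \<in> A" "\<beta> \<in> A" "b \<alpha> = b \<beta>"
    then show "\<alpha> = \<beta>" using tri[of \<alpha> \<alpha>] tri[of \<alpha> \<beta>] by (auto split: if_splits)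
  qed
  have "mp.dim (L \<inter> hom_part d) = card (b ` A)"
  proof (rule mp.dim_unique[OF _ _ triangular_indep[OF finA inj tri] refl])
    show "b ` A \<subseteq> L \<inter> hom_part d"
    proof
      fix p assume "p \<in> b ` A"
      then obtain \<alpha> where \<alpha>: "\<alpha> \<in> A" "p = b \<alpha>" by auto
      have "p \<in> L" unfolding \<alpha>(2) b_def by (rule binom_in_L[OF rel_sym[OF std_rel]])
      moreover have "Poly_Mapping.keys p \<subseteq> Pd d"
        using \<alpha> std_deg[of \<alpha>] keys_diff[of "Poly_Mapping.single \<alpha> (1::'a)" "Poly_Mapping.single (std \<alpha>) 1"]
        by (auto simp: b_def A_def Pd_def)
      ultimately show "p \<in> L \<inter> hom_part d" by (simp add: hom_part_keys)
    qed
    show "L \<inter> hom_part d \<subseteq> mp.span (b ` A)"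
    proof
      fix f assume f: "f \<in> L \<inter> hom_part d"
      define g where "g = f - (\<Sum>\<alpha>\<in>A. scal (Poly_Mapping.lookup f \<alpha>) (b \<alpha>))"
      have bL: "b \<alpha> \<in> L" if "\<alpha> \<in> A" for \<alpha>
        unfolding b_def by (rule binom_in_L[OF rel_sym[OF std_rel]])
      have gL: "g \<in> L" unfolding g_def scal_def
        using f bL by (intro L_diff L_sum L_mult) auto
      have fk: "Poly_Mapping.keys f \<subseteq> Pd d" using f by (simp add: hom_part_keys)
      have "Poly_Mapping.keys g \<subseteq> Pd d - E"
      proof
        fix \<gamma> assume \<gamma>: "\<gamma> \<in> Poly_Mapping.keys g"
        have lg: "Poly_Mapping.lookup g \<gamma> = Poly_Mapping.lookup f \<gamma> -
            (\<Sum>\<alpha>\<in>A. Poly_Mapping.lookup f \<alpha> * Poly_Mapping.lookup (b \<alpha>) \<gamma>)"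
          by (simp add: g_def lookup_minus lookup_sum lookup_scal)
        show "\<gamma> \<in> Pd d - E"
        proof (rule ccontr)
          assume nin: "\<gamma> \<notin> Pd d - E"
          have "Poly_Mapping.lookup g \<gamma> = 0"
          proof (cases "\<gamma> \<in> A")
            case True
            have "(\<Sum>\<alpha>\<in>A. Poly_Mapping.lookup f \<alpha> * Poly_Mapping.lookup (b \<alpha>) \<gamma>)
               = (\<Sum>\<alpha>\<in>A. if \<alpha> = \<gamma> then Poly_Mapping.lookup f \<alpha> else 0)"
              by (rule sum.cong) (use tri True in auto)
            then show ?thesis using lg True finA by simp
          next
            case False
            then have "\<gamma> \<notin> Pd d" using nin by (auto simp: A_def)
            then have f0: "Poly_Mapping.lookup f \<gamma> = 0" using fk by (auto simp: in_keys_iff)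
            have "Poly_Mapping.lookup (b \<alpha>) \<gamma> = 0" if "\<alpha> \<in> A" for \<alpha>
            proof -
              have "\<alpha> \<in> Pd d" "std \<alpha> \<in> Pd d" using that std_deg[of \<alpha>] by (auto simp: A_def Pd_def)
              then show ?thesis using \<open>\<gamma> \<notin> Pd d\<close> by (auto simp: b_def lookup_minus lookup_single when_def)
            qed
            then show ?thesis using lg f0 by simp
          qed
          then show False using \<gamma> by (simp add: in_keys_iff)
        qed
      qed
      then have "g = 0" by (rule std_pts_zero[OF gL])
      then have "f = (\<Sum>\<alpha>\<in>A. scal (Poly_Mapping.lookup f \<alpha>) (b \<alpha>))" by (simp add: g_def)
      also have "\<dots> \<in> mp.span (b ` A)"
        by (intro mp.span_sum mp.span_scale mp.span_base) auto
      finally show "f \<in> mp.span (b ` A)" .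
    qed
  qed
  then show ?thesis using card_image[OF inj] by (simp add: A_def)
qed

lemma hilbert_L: "hilbert_fun L d = card (Pd d - E)"
proof -
  have "hilbert_fun L d = card (Pd d :: ('v \<Rightarrow>\<^sub>0 nat) set) - card (Pd d \<inter> E)"
    by (simp add: hilbert_fun_def dim_hom_part dim_L)
  also have "\<dots> = card (Pd d - E)"
    by (rule card_Diff_subset_Int[symmetric]) (simp add: finite_Pd)
  finally show ?thesis .
qed

end

definition le_pw :: "('v \<Rightarrow>\<^sub>0 nat) \<Rightarrow> ('v \<Rightarrow>\<^sub>0 nat) \<Rightarrow> bool" where
  "le_pw \<alpha> \<beta> \<longleftrightarrow> (\<forall>v. Poly_Mapping.lookup \<alpha> v \<le> Poly_Mapping.lookup \<beta> v)"

lemma le_pw_refl: "le_pw \<alpha> \<alpha>" by (simp add: le_pw_def)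
lemma le_pw_trans: "le_pw \<alpha> \<beta> \<Longrightarrow> le_pw \<beta> \<gamma> \<Longrightarrow> le_pw \<alpha> \<gamma>"
  unfolding le_pw_def using order_trans by blast
lemma le_pw_add: "le_pw \<alpha> (\<alpha> + \<gamma>)" by (simp add: le_pw_def lookup_add)
lemma le_pw_ex: "le_pw \<alpha> \<beta> \<Longrightarrow> \<beta> = \<alpha> + (\<beta> - \<alpha>)"
  by (rule poly_mapping_eqI) (simp add: le_pw_def lookup_add lookup_minus)
lemma le_pw_minus: "le_pw (\<mu> - m) \<gamma> \<longleftrightarrow> le_pw \<mu> (m + \<gamma>)"
  unfolding le_pw_def lookup_add lookup_minus by (intro iff_allI) arith

lemma mdeg_less:
  assumes "le_pw \<alpha> \<beta>" "\<alpha> \<noteq> \<beta>"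
  shows "mdeg \<alpha> < mdeg (\<beta> :: 'v::finite \<Rightarrow>\<^sub>0 nat)"
proof -
  have "\<exists>v. Poly_Mapping.lookup \<alpha> v \<noteq> Poly_Mapping.lookup \<beta> v"
  proof (rule ccontr)
    assume "\<not> ?thesis"
    then have "\<alpha> = \<beta>" by (intro poly_mapping_eqI) simp
    then show False using assms(2) by simp
  qed
  then obtain v where "Poly_Mapping.lookup \<alpha> v \<noteq> Poly_Mapping.lookup \<beta> v" by blast
  then have "Poly_Mapping.lookup \<alpha> v < Poly_Mapping.lookup \<beta> v" using assms(1) by (simp add: le_pw_def le_neq_trans)
  then show ?thesis unfolding mdeg_UNIV
    by (intro sum_strict_mono_ex1) (use assms(1) in \<open>auto simp: le_pw_def\<close>)
qed

definition incr :: "(nat \<Rightarrow> nat) \<Rightarrow> bool" where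
  "incr f \<longleftrightarrow> (\<forall>a b. a \<le> b \<longrightarrow> f a \<le> f b)"

lemma nat_mono_sub: fixes x :: "nat \<Rightarrow> nat" shows "\<exists>g. strict_mono g \<and> incr (\<lambda>n. x (g n))"
proof -
  obtain f where f: "strict_mono f" "monoseq (\<lambda>n. x (f n))" using seq_monosub by blast
  show ?thesis
  proof (cases "\<forall>m. \<forall>n\<ge>m. x (f m) \<le> x (f n)")
    case True then show ?thesis using f(1) by (intro exI[of _ f]) (auto simp: incr_def)
  next
    case False
    then have dec: "\<forall>m. \<forall>n\<ge>m. x (f n) \<le> x (f m)" using f(2) by (auto simp: monoseq_def)
    obtain n where n: "\<forall>k. x (f n) \<le> x (f k)" using ex_has_least_nat[of "\<lambda>_. True" 0 "\<lambda>k. x (f k)"] by auto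
    have c: "x (f (k + n)) = x (f n)" for k
      using dec[rule_format, of n "k+n"] n[rule_format, of "k+n"] by simp
    have sm: "strict_mono (\<lambda>k. f (k + n))" using f(1) by (auto simp: strict_mono_def)
    show ?thesis
      by (intro exI[of _ "\<lambda>k. f (k + n)"]) (auto simp: sm c incr_def)
  qed
qed

lemma dickson_seq_aux:
  fixes f :: "nat \<Rightarrow> ('v \<Rightarrow>\<^sub>0 nat)"
  assumes "finite V"
  shows "\<exists>g. strict_mono g \<and> (\<forall>v\<in>V. incr (\<lambda>n. Poly_Mapping.lookup (f (g n)) v))"
  using assms
proof (induction V rule: finite_induct)
  case empty show ?case by (intro exI[of _ "id :: nat \<Rightarrow> nat"]) (auto simp: strict_mono_def)
next
  case (insert w V)
  then obtain g :: "nat \<Rightarrow> nat" where g: "strict_mono g" "\<forall>v\<in>V. incr (\<lambda>n. Poly_Mapping.lookup (f (g n)) v)" by blast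
  obtain h :: "nat \<Rightarrow> nat" where h: "strict_mono h" "incr (\<lambda>n. Poly_Mapping.lookup (f (g (h n))) w)"
    using nat_mono_sub[of "\<lambda>n. Poly_Mapping.lookup (f (g n)) w"] by blast
  have "strict_mono (\<lambda>n. g (h n))" using g(1) h(1) by (auto simp: strict_mono_def)
  moreover have "incr (\<lambda>n. Poly_Mapping.lookup (f (g (h n))) v)" if v: "v \<in> V" for v
    unfolding incr_def
  proof (intro allI impI)
    fix a b :: nat assume "a \<le> b"
    then have "h a \<le> h b" using strict_mono_less_eq[OF h(1)] by simp
    then show "Poly_Mapping.lookup (f (g (h a))) v \<le> Poly_Mapping.lookup (f (g (h b))) v"
      using g(2) v unfolding incr_def by blast
  qed
  ultimately show ?case using h(2) by (intro exI[of _ "\<lambda>n. g (h n)"]) auto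
qed

lemma dickson_seq:
  fixes f :: "nat \<Rightarrow> ('v::finite \<Rightarrow>\<^sub>0 nat)"
  shows "\<exists>i j. i < j \<and> le_pw (f i) (f j)"
proof -
  obtain g :: "nat \<Rightarrow> nat" where g: "strict_mono g" "\<forall>v\<in>UNIV. incr (\<lambda>n. Poly_Mapping.lookup (f (g n)) v)"
    using dickson_seq_aux[where f=f and V=UNIV] by auto
  have "g 0 < g 1" using g(1) by (simp add: strict_mono_def)
  moreover have "le_pw (f (g 0)) (f (g 1))" using g(2) by (auto simp: le_pw_def incr_def)
  ultimately show ?thesis by blast
qed

definition mins :: "('v \<Rightarrow>\<^sub>0 nat) set \<Rightarrow> ('v \<Rightarrow>\<^sub>0 nat) set" where
  "mins E = {\<alpha>\<in>E. \<forall>\<beta>\<in>E. le_pw \<beta> \<alpha> \<longrightarrow> \<beta> = \<alpha>}"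

lemma below_min: "\<alpha> \<in> E \<Longrightarrow> \<exists>m\<in>mins E. le_pw m (\<alpha> :: 'v::finite \<Rightarrow>\<^sub>0 nat)"
proof (induction "mdeg \<alpha>" arbitrary: \<alpha> rule: less_induct)
  case less
  show ?case
  proof (cases "\<alpha> \<in> mins E")
    case True then show ?thesis using le_pw_refl by blast
  next
    case False
    then obtain \<beta> where \<beta>: "\<beta> \<in> E" "le_pw \<beta> \<alpha>" "\<beta> \<noteq> \<alpha>" using less.prems by (auto simp: mins_def)
    have "mdeg \<beta> < mdeg \<alpha>" using \<beta>(2,3) by (rule mdeg_less)
    from less.hyps[OF this \<beta>(1)] obtain m where "m \<in> mins E" "le_pw m \<beta>" by blast
    then show ?thesis using \<beta>(2) le_pw_trans by blast
  qed
qed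

lemma finite_mins: "finite (mins (E :: ('v::finite \<Rightarrow>\<^sub>0 nat) set))"
proof (rule ccontr)
  assume "infinite (mins E)"
  then obtain f :: "nat \<Rightarrow> _" where f: "inj f" "range f \<subseteq> mins E"
    using infinite_countable_subset by blast
  obtain i j where ij: "i < j" "le_pw (f i) (f j)" using dickson_seq[of f] by blast
  have "f i \<in> E" "f j \<in> mins E" using f(2) by (auto simp: mins_def)
  then have "f i = f j" using ij(2) by (auto simp: mins_def)
  then show False using f(1) ij(1) by (auto dest: injD)
qed

definition upc :: "('v \<Rightarrow>\<^sub>0 nat) set \<Rightarrow> ('v \<Rightarrow>\<^sub>0 nat) set" where
  "upc M = {\<alpha>. \<exists>m\<in>M. le_pw m \<alpha>}"

lemma upset_upc:
  assumes up: "\<And>\<alpha> \<gamma>. \<alpha> \<in> E \<Longrightarrow> \<alpha> + \<gamma> \<in> E"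
  shows "E = upc (mins (E :: ('v::finite \<Rightarrow>\<^sub>0 nat) set))"
proof
  show "E \<subseteq> upc (mins E)" using below_min by (auto simp: upc_def)
  show "upc (mins E) \<subseteq> E"
  proof
    fix \<alpha> assume "\<alpha> \<in> upc (mins E)"
    then obtain m where m: "m \<in> E" "le_pw m \<alpha>" by (auto simp: upc_def mins_def)
    from up[OF m(1), of "\<alpha> - m"] have "m + (\<alpha> - m) \<in> E" .
    then show "\<alpha> \<in> E" using le_pw_ex[OF m(2), symmetric] by simp
  qed
qed

definition EP :: "(nat \<Rightarrow> nat) \<Rightarrow> bool" where
  "EP f \<longleftrightarrow> (\<exists>p::real poly. \<forall>\<^sub>F d in sequentially. poly p (real d) = real (f d))"

lemma EP_cong: fixes f g :: "nat \<Rightarrow> nat" shows "EP f \<Longrightarrow> \<forall>\<^sub>F d in sequentially. f d = g d \<Longrightarrow> EP g"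
proof -
  assume "EP f" and fg: "\<forall>\<^sub>F d in sequentially. f d = g d"
  then obtain p where p: "\<forall>\<^sub>F d in sequentially. poly p (real d) = real (f d)" by (auto simp: EP_def)
  have "\<forall>\<^sub>F d in sequentially. poly p (real d) = real (g d)" using p fg by eventually_elim simp
  then show ?thesis by (auto simp: EP_def)
qed

lemma EP_diff:
  fixes f g :: "nat \<Rightarrow> nat"
  assumes "EP f" "EP g" "\<forall>\<^sub>F d in sequentially. g d \<le> f d"
  shows "EP (\<lambda>d. f d - g d)"
proof -
  obtain p q where p: "\<forall>\<^sub>F d in sequentially. poly p (real d) = real (f d)"
    and q: "\<forall>\<^sub>F d in sequentially. poly q (real d) = real (g d)"
    using assms(1,2) by (auto simp: EP_def)
  have "\<forall>\<^sub>F d in sequentially. poly (p - q) (real d) = real (f d - g d)"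
    using p q assms(3) by eventually_elim (simp add: of_nat_diff)
  then show ?thesis unfolding EP_def by blast
qed

lemma EP_shift:
  fixes f :: "nat \<Rightarrow> nat"
  assumes "EP f" shows "EP (\<lambda>d. f (d - c))"
proof -
  obtain p where p: "\<forall>\<^sub>F d in sequentially. poly p (real d) = real (f d)"
    using assms by (auto simp: EP_def)
  then obtain N where N: "\<And>d. d \<ge> N \<Longrightarrow> poly p (real d) = real (f d)"
    by (auto simp: eventually_sequentially)
  have "\<forall>\<^sub>F d in sequentially. poly (pcompose p [:- real c, 1:]) (real d) = real (f (d - c))"
    unfolding eventually_sequentially
  proof (intro exI[of _ "N + c"] allI impI)
    fix d assume "N + c \<le> d"
    then have "poly p (real (d - c)) = real (f (d - c))" by (intro N) auto
    moreover have "real (d - c) = real d - real c" using \<open>N + c \<le> d\<close> by (simp add: of_nat_diff)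
    ultimately show "poly (pcompose p [:- real c, 1:]) (real d) = real (f (d - c))"
      by (simp add: poly_pcompose)
  qed
  then show ?thesis by (auto simp: EP_def)
qed

lemma EP_binom: "EP (\<lambda>d. (d + k) choose k)"
proof -
  define p where "p = (\<Prod>i\<in>{0..<k}. [: (real k - real i) / real (k - i), 1 / real (k - i) :])"
  have "poly p (real d) = real ((d + k) choose k)" for d
  proof -
    have "real ((d + k) choose k) = (real (d + k) gchoose k)" by (rule binomial_gbinomial)
    also have "\<dots> = (\<Prod>i = 0..<k. (real (d+k) - of_nat i) / of_nat (k - i))"
      by (rule gbinomial_altdef_of_nat)
    also have "\<dots> = poly p (real d)"
      unfolding p_def poly_prod
    proof (intro prod.cong refl)
      fix i assume "i \<in> {0..<k}"
      then have i: "i < k" by simp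
      then have nz: "real k - real i \<noteq> 0" by simp
      show "(real (d+k) - of_nat i) / of_nat (k - i) = poly [: (real k - real i) / real (k - i), 1 / real (k - i) :] (real d)"
        using i nz by (simp add: of_nat_diff field_simps)
    qed
    finally show ?thesis by simp
  qed
  then have "\<forall>\<^sub>F d in sequentially. poly p (real d) = real ((d + k) choose k)"
    by (intro always_eventually allI) simp
  then show ?thesis unfolding EP_def by blast
qed

lemma size_count_UNIV: "size (M :: 'v::finite multiset) = (\<Sum>v\<in>UNIV. count M v)"
proof -
  have "size M = (\<Sum>v\<in>set_mset M. count M v)" by (simp add: size_multiset_overloaded_eq)
  also have "\<dots> = (\<Sum>v\<in>UNIV. count M v)" by (intro sum.mono_neutral_left) (auto simp: count_eq_zero_iff)
  finally show ?thesis .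
qed

lemma card_Pd: "card (Pd d :: ('v::finite \<Rightarrow>\<^sub>0 nat) set) = (card (UNIV :: 'v set) + d - 1) choose d"
proof -
  let ?f = "\<lambda>M :: 'v multiset. Abs_poly_mapping (count M)"
  have inj: "inj_on ?f (multisets_of_size UNIV d)"
  proof (rule inj_onI)
    fix M N assume "?f M = ?f N"
    then have "Poly_Mapping.lookup (?f M) = Poly_Mapping.lookup (?f N)" by simp
    then show "M = N" by (simp add: multiset_eqI)
  qed
  have img: "?f ` multisets_of_size UNIV d = Pd d"
  proof
    show "?f ` multisets_of_size UNIV d \<subseteq> Pd d"
      by (auto simp: multisets_of_size_def Pd_def mdeg_UNIV size_count_UNIV)
    show "Pd d \<subseteq> ?f ` multisets_of_size UNIV d"
    proof
      fix \<alpha> :: "'v \<Rightarrow>\<^sub>0 nat" assume a: "\<alpha> \<in> Pd d"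
      define M where "M = Abs_multiset (Poly_Mapping.lookup \<alpha>)"
      have cM: "count M = Poly_Mapping.lookup \<alpha>" unfolding M_def by (rule count_Abs_multiset) simp
      have "size M = d" using a by (simp add: size_count_UNIV cM Pd_def mdeg_UNIV)
      moreover have "?f M = \<alpha>" by (simp add: cM lookup_inverse)
      ultimately show "\<alpha> \<in> ?f ` multisets_of_size UNIV d"
        by (auto simp: multisets_of_size_def intro!: image_eqI[of _ _ M])
    qed
  qed
  have "card (Pd d :: ('v \<Rightarrow>\<^sub>0 nat) set) = card (multisets_of_size (UNIV :: 'v set) d)"
    using card_image[OF inj] img by simp
  also have "\<dots> = (card (UNIV :: 'v set) + d - 1) choose d" by (rule card_multisets_of_size) simp
  finally show ?thesis .
qed

lemma EP_Pd: "EP (\<lambda>d. card (Pd d :: ('v::finite \<Rightarrow>\<^sub>0 nat) set))"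
proof -
  define k where "k = card (UNIV :: 'v set) - 1"
  have "card (UNIV :: 'v set) > 0" by (simp add: card_gt_0_iff)
  then have ck: "card (UNIV :: 'v set) = k + 1" using k_def by simp
  have "card (Pd d :: ('v \<Rightarrow>\<^sub>0 nat) set) = (d + k) choose k" for d
    by (simp add: card_Pd ck binomial_symmetric[of k "d + k"] add.commute)
  then show ?thesis using EP_binom[of k] by (simp add: EP_def)
qed

lemma EP_upc:
  assumes "finite M"
  shows "EP (\<lambda>d. card (Pd d - upc (M :: ('v::finite \<Rightarrow>\<^sub>0 nat) set)))"
  using assms
proof (induction "card M" arbitrary: M rule: less_induct)
  case less
  show ?case
  proof (cases "M = {}")
    case True
    then show ?thesis using EP_Pd by (simp add: upc_def)
  next
    case False
    then obtain m M' where M: "M = insert m M'" "m \<notin> M'" by (metis equals0I insert_Diff Diff_iff singletonI)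
    have fM': "finite M'" using less.prems M by simp
    have cM': "card M' < card M" using less.prems M by simp
    define Mm where "Mm = (\<lambda>\<mu>. \<mu> - m) ` M'"
    have fMm: "finite Mm" using fM' by (simp add: Mm_def)
    have cMm: "card Mm < card M" using card_image_le[OF fM', of "\<lambda>\<mu>. \<mu> - m"] cM' by (simp add: Mm_def)
    have IH1: "EP (\<lambda>d. card (Pd d - upc M'))" using less.hyps[OF cM' fM'] .
    have IH2: "EP (\<lambda>d. card (Pd d - upc Mm))" using less.hyps[OF cMm fMm] .
    let ?F1 = "\<lambda>d. card (Pd d - upc M')"
    let ?F2 = "\<lambda>d. card (Pd (d - mdeg m) - upc Mm)"
    have key: "card (Pd d - upc M) = ?F1 d - ?F2 d \<and> ?F2 d \<le> ?F1 d" if d: "d \<ge> mdeg m" for d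
    proof -
      define S where "S = {\<alpha> \<in> Pd d - upc M'. le_pw m \<alpha>}"
      have SS: "S \<subseteq> Pd d - upc M'" by (auto simp: S_def)
      have eq1: "Pd d - upc M = (Pd d - upc M') - S"
        by (auto simp: S_def upc_def M)
      have up_iff: "m + \<gamma> \<in> upc M' \<longleftrightarrow> \<gamma> \<in> upc Mm" for \<gamma>
        by (auto simp: upc_def Mm_def le_pw_minus)
      have img: "S = (\<lambda>\<gamma>. m + \<gamma>) ` (Pd (d - mdeg m) - upc Mm)"
      proof
        show "S \<subseteq> (\<lambda>\<gamma>. m + \<gamma>) ` (Pd (d - mdeg m) - upc Mm)"
        proof
          fix \<alpha> assume a: "\<alpha> \<in> S"
          have eqa: "\<alpha> = m + (\<alpha> - m)" by (rule le_pw_ex) (use a in \<open>simp add: S_def\<close>)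
          have dg: "mdeg \<alpha> = mdeg m + mdeg (\<alpha> - m)" by (subst eqa) (simp add: mdeg_add)
          have "\<alpha> - m \<in> Pd (d - mdeg m)" using a dg by (auto simp: S_def Pd_def)
          moreover have "\<alpha> - m \<notin> upc Mm" using up_iff[of "\<alpha> - m"] a eqa[symmetric] by (auto simp: S_def)
          ultimately have "\<alpha> - m \<in> Pd (d - mdeg m) - upc Mm" by blast
          moreover note eqa
          ultimately show "\<alpha> \<in> (\<lambda>\<gamma>. m + \<gamma>) ` (Pd (d - mdeg m) - upc Mm)" by blast
        qed
        show "(\<lambda>\<gamma>. m + \<gamma>) ` (Pd (d - mdeg m) - upc Mm) \<subseteq> S"
          using d up_iff by (auto simp: S_def Pd_def mdeg_add le_pw_add)
      qed
      have injS: "inj_on (\<lambda>\<gamma>. m + \<gamma>) (Pd (d - mdeg m) - upc Mm)" by (auto simp: inj_on_def)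
      have cS: "card S = ?F2 d" unfolding img using card_image[OF injS] .
      have fin: "finite (Pd d - upc M')" using finite_Pd by auto
      have "card (Pd d - upc M) = ?F1 d - card S"
        unfolding eq1 by (rule card_Diff_subset[OF finite_subset[OF SS fin] SS])
      moreover have "card S \<le> ?F1 d" by (rule card_mono[OF fin SS])
      ultimately show ?thesis using cS by simp
    qed
    have "EP (\<lambda>d. ?F1 d - ?F2 d)"
      by (rule EP_diff[OF IH1 EP_shift[OF IH2]])
         (use key in \<open>auto simp: eventually_sequentially intro!: exI[of _ "mdeg m"]\<close>)
    then show ?thesis
      by (rule EP_cong) (use key in \<open>auto simp: eventually_sequentially intro!: exI[of _ "mdeg m"]\<close>)
  qed
qed

lemma EP_upset:
  assumes up: "\<And>\<alpha> \<gamma>. \<alpha> \<in> E \<Longrightarrow> \<alpha> + \<gamma> \<in> E"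
  shows "EP (\<lambda>d. card (Pd d - (E :: ('v::finite \<Rightarrow>\<^sub>0 nat) set)))"
proof -
  have eq: "E = upc (mins E)" by (rule upset_upc) (rule up)
  have "EP (\<lambda>d. card (Pd d - upc (mins E)))" by (rule EP_upc[OF finite_mins])
  then show ?thesis by (simp only: eq[symmetric])
qed

lemma poly_eventually_unique:
  assumes "\<forall>\<^sub>F d in sequentially. poly p (real d) = poly q (real d)"
  shows "p = (q :: real poly)"
proof (rule ccontr)
  assume "p \<noteq> q"
  then have fin: "finite {x. poly (p - q) x = 0}" by (intro poly_roots_finite) simp
  obtain N where N: "\<And>d. d \<ge> N \<Longrightarrow> poly p (real d) = poly q (real d)"
    using assms by (auto simp: eventually_sequentially)
  have "real ` {N..} \<subseteq> {x. poly (p - q) x = 0}" using N by auto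
  then have "finite (real ` {N..})" using fin finite_subset by blast
  moreover have "infinite (real ` {N..})"
    using finite_imageD[of real "{N..}"] infinite_Ici[of N] by (auto simp: inj_on_def)
  ultimately show False by blast
qed

definition vecz :: "'v \<Rightarrow> 'v \<Rightarrow> nat \<Rightarrow> 'v \<Rightarrow> int" where
  "vecz z v k = (\<lambda>w. if w = v then int k else if w = z then - int k else 0)"

definition sz :: "'v \<Rightarrow> ('v::finite \<Rightarrow>\<^sub>0 nat) \<Rightarrow> nat" where
  "sz z \<gamma> = (\<Sum>w\<in>UNIV - {z}. Poly_Mapping.lookup \<gamma> w)"

lemma sz_add: "sz z (\<alpha> + \<beta>) = sz z \<alpha> + sz z \<beta>"
  by (simp add: sz_def lookup_add sum.distrib)

lemma sz_single: "sz z (Poly_Mapping.single v k) = (if v = z then 0 else k)"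
  by (auto simp: sz_def lookup_single when_def)

lemma mdeg_sz: "mdeg \<gamma> = Poly_Mapping.lookup \<gamma> z + sz z (\<gamma> :: 'v::finite \<Rightarrow>\<^sub>0 nat)"
  unfolding mdeg_UNIV sz_def by (simp add: sum.remove[of UNIV z])

context latid
begin

lemma EP_L: "EP (hilbert_fun L)"
proof -
  have "EP (\<lambda>d. card (Pd d - E))" by (rule EP_upset) (rule E_up)
  moreover have "hilbert_fun L = (\<lambda>d. card (Pd d - E))" by (rule ext) (rule hilbert_L)
  ultimately show ?thesis by simp
qed

lemma deficient_grow:
  assumes vz: "v \<noteq> z" and nv: "\<And>k. k > 0 \<Longrightarrow> vecz z v k \<notin> Lt"
  shows "d + 1 \<le> hilbert_fun L d"
proof -
  define \<pi> where "\<pi> k = Poly_Mapping.single v k + Poly_Mapping.single z (d - k)" for k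
  have l\<pi>: "Poly_Mapping.lookup (\<pi> k) w = (if w = v then k else 0) + (if w = z then d - k else 0)" for k w
    by (simp add: \<pi>_def lookup_add lookup_single when_def)
  have deg: "mdeg (\<pi> k) = d" if "k \<le> d" for k
    using that by (simp add: \<pi>_def mdeg_add)
  have key: "\<not> rel (\<pi> j) (\<pi> k)" if "j \<le> d" "k \<le> d" "k < j" for j k
  proof
    assume "rel (\<pi> j) (\<pi> k)"
    moreover have "(\<lambda>w. int (Poly_Mapping.lookup (\<pi> j) w) - int (Poly_Mapping.lookup (\<pi> k) w)) = vecz z v (j - k)"
      using that vz by (auto simp: l\<pi> vecz_def of_nat_diff)
    ultimately have "vecz z v (j - k) \<in> Lt" by (simp add: rel_def)
    then show False using nv[of "j - k"] that by simp
  qed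
  have relstd: "rel \<alpha> \<beta>" if "std \<alpha> = std \<beta>" for \<alpha> \<beta>
    using rel_trans[OF rel_sym[OF std_rel[of \<alpha>]]] std_rel[of \<beta>] that by metis
  have inj: "inj_on (\<lambda>k. std (\<pi> k)) {0..d}"
  proof (rule inj_onI)
    fix j k assume jk: "j \<in> {0..d}" "k \<in> {0..d}" "std (\<pi> j) = std (\<pi> k)"
    show "j = k"
    proof (rule ccontr)
      assume "j \<noteq> k"
      then consider "k < j" | "j < k" by linarith
      then show False
      proof cases
        case 1 then show False using key[of j k] jk relstd by auto
      next
        case 2 then show False using key[of k j] jk relstd[of "\<pi> k" "\<pi> j"] by auto
      qed
    qed
  qed
  have sub: "(\<lambda>k. std (\<pi> k)) ` {0..d} \<subseteq> Pd d - E"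
    using std_notin_E std_deg deg by (auto simp: Pd_def)
  have "d + 1 = card ((\<lambda>k. std (\<pi> k)) ` {0..d})" using card_image[OF inj] by simp
  also have "\<dots> \<le> card (Pd d - E)" by (rule card_mono[OF _ sub]) (simp add: finite_Pd)
  also have "\<dots> = hilbert_fun L d" by (simp add: hilbert_L)
  finally show ?thesis .
qed

lemma reduce:
  assumes n: "\<And>v. v \<noteq> z \<Longrightarrow> 0 < n v \<and> vecz z v (n v) \<in> Lt"
  shows "(\<Sum>v\<in>UNIV - {z}. n v - 1) + 1 \<le> mdeg \<gamma> \<Longrightarrow> \<exists>\<gamma>'\<in>grp \<gamma>. 1 \<le> Poly_Mapping.lookup \<gamma>' z"
proof (induction "sz z \<gamma>" arbitrary: \<gamma> rule: less_induct)
  case less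
  show ?case
  proof (cases "\<forall>v. v \<noteq> z \<longrightarrow> Poly_Mapping.lookup \<gamma> v < n v")
    case True
    have "sz z \<gamma> \<le> (\<Sum>v\<in>UNIV - {z}. n v - 1)" unfolding sz_def
      by (rule sum_mono) (use True in auto)
    then have "1 \<le> Poly_Mapping.lookup \<gamma> z" using less.prems mdeg_sz[of \<gamma> z] by linarith
    then show ?thesis using grp_self by blast
  next
    case False
    then obtain v where v: "v \<noteq> z" "n v \<le> Poly_Mapping.lookup \<gamma> v" by (auto simp: not_less)
    define \<delta>' where "\<delta>' = \<gamma> - Poly_Mapping.single v (n v)"
    have g: "\<gamma> = \<delta>' + Poly_Mapping.single v (n v)"
      by (rule poly_mapping_eqI) (use v in \<open>auto simp: \<delta>'_def lookup_add lookup_minus lookup_single when_def\<close>)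
    define \<delta> where "\<delta> = \<delta>' + Poly_Mapping.single z (n v)"
    have d1: "mdeg \<delta> = mdeg \<gamma>" by (subst g) (simp add: \<delta>_def mdeg_add)
    have s2: "sz z \<gamma> = sz z \<delta>' + n v" by (subst g) (simp add: sz_add sz_single v(1))
    have s3: "sz z \<delta> = sz z \<delta>'" by (simp add: \<delta>_def sz_add sz_single)
    have s1: "sz z \<delta> < sz z \<gamma>" using n[OF v(1)] s2 s3 by linarith
    have "(\<lambda>w. int (Poly_Mapping.lookup \<delta> w) - int (Poly_Mapping.lookup \<gamma> w)) = (\<lambda>w. - vecz z v (n v) w)"
    proof
      fix w
      have "Poly_Mapping.lookup \<gamma> w = Poly_Mapping.lookup \<delta>' w + (if w = v then n v else 0)"
        by (subst g) (simp add: lookup_add lookup_single when_def)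
      then show "int (Poly_Mapping.lookup \<delta> w) - int (Poly_Mapping.lookup \<gamma> w) = - vecz z v (n v) w"
        using v(1) by (auto simp: \<delta>_def lookup_add lookup_single when_def vecz_def)
    qed
    then have "rel \<delta> \<gamma>" using Lneg[of "vecz z v (n v)"] n[OF v(1)] by (simp add: rel_def)
    then have dg: "\<delta> \<in> grp \<gamma>" using d1 by (simp add: grp_def)
    have "\<exists>\<gamma>'\<in>grp \<delta>. 1 \<le> Poly_Mapping.lookup \<gamma>' z" using less.hyps[OF s1] less.prems d1 by simp
    then show ?thesis using grp_eq[OF dg] by simp
  qed
qed

lemma const_step:
  assumes n: "\<And>v. v \<noteq> z \<Longrightarrow> 0 < n v \<and> vecz z v (n v) \<in> Lt"
    and d: "(\<Sum>v\<in>UNIV - {z}. n v - 1) \<le> d"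
  shows "card (Pd (Suc d) - E) = card (Pd d - E)"
proof -
  define e where "e = Poly_Mapping.single z (1::nat)"
  define \<phi> where "\<phi> \<alpha> = std (\<alpha> + e)" for \<alpha>
  have relstd: "rel \<alpha> \<beta>" if "std \<alpha> = std \<beta>" for \<alpha> \<beta>
    using rel_trans[OF rel_sym[OF std_rel[of \<alpha>]]] std_rel[of \<beta>] that by metis
  have inj: "inj_on \<phi> (Pd d - E)"
  proof (rule inj_onI)
    fix \<alpha> \<beta> assume a: "\<alpha> \<in> Pd d - E" and b: "\<beta> \<in> Pd d - E" and eq: "\<phi> \<alpha> = \<phi> \<beta>"
    have "rel (\<alpha> + e) (\<beta> + e)" using relstd eq by (simp add: \<phi>_def)
    then have "rel \<beta> \<alpha>" by (simp add: rel_shift rel_sym)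
    then have "\<beta> \<in> grp \<alpha>" using a b by (simp add: grp_def Pd_def)
    from std_unique[OF this] b a show "\<alpha> = \<beta>" by (simp add: E_def)
  qed
  have img: "\<phi> ` (Pd d - E) = Pd (Suc d) - E"
  proof
    show "\<phi> ` (Pd d - E) \<subseteq> Pd (Suc d) - E"
      using std_notin_E std_deg by (auto simp: \<phi>_def Pd_def mdeg_add e_def)
    show "Pd (Suc d) - E \<subseteq> \<phi> ` (Pd d - E)"
    proof
      fix \<gamma> assume \<gamma>: "\<gamma> \<in> Pd (Suc d) - E"
      obtain \<gamma>' where g': "\<gamma>' \<in> grp \<gamma>" "1 \<le> Poly_Mapping.lookup \<gamma>' z"
        using reduce[OF n, of \<gamma>] \<gamma> d by (auto simp: Pd_def)
      define \<alpha>0 where "\<alpha>0 = \<gamma>' - e"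
      have ga: "\<gamma>' = \<alpha>0 + e"
        by (rule poly_mapping_eqI) (use g'(2) in \<open>auto simp: \<alpha>0_def e_def lookup_add lookup_minus lookup_single when_def\<close>)
      have "mdeg \<gamma>' = Suc d" using g'(1) \<gamma> by (simp add: grp_def Pd_def)
      then have da: "mdeg \<alpha>0 = d" using ga by (simp add: mdeg_add e_def)
      have "std \<alpha>0 + e \<in> grp \<gamma>'"
        using std_in[of \<alpha>0] ga by (simp add: grp_def mdeg_add rel_shift)
      then have "std \<alpha>0 + e \<in> grp \<gamma>" using grp_eq[OF g'(1)] by simp
      then have "\<phi> (std \<alpha>0) = std \<gamma>" unfolding \<phi>_def by (rule std_cong)
      also have "\<dots> = \<gamma>" using \<gamma> by (simp add: E_def)
      finally have "\<phi> (std \<alpha>0) = \<gamma>" .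
      moreover have "std \<alpha>0 \<in> Pd d - E" using std_notin_E std_deg[of \<alpha>0] da by (simp add: Pd_def)
      ultimately show "\<gamma> \<in> \<phi> ` (Pd d - E)" by blast
    qed
  qed
  show ?thesis using card_image[OF inj] img by simp
qed

lemma hilbert_const:
  assumes n: "\<And>v. v \<noteq> z \<Longrightarrow> 0 < n v \<and> vecz z v (n v) \<in> Lt"
    and d: "(\<Sum>v\<in>UNIV - {z}. n v - 1) \<le> d"
  shows "hilbert_fun L d = hilbert_fun L (\<Sum>v\<in>UNIV - {z}. n v - 1)"
  using d
proof (induction d rule: dec_induct)
  case base then show ?case by simp
next
  case (step d)
  then show ?case using const_step[OF n step(1)] by (simp add: hilbert_L)
qed

lemma binom_gen_in_L:
  assumes "v \<noteq> z" "vecz z v k \<in> Lt"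
  shows "var v ^ k - var z ^ k \<in> L"
proof -
  have p: "Abs_poly_mapping (pos_part (vecz z v k)) = Poly_Mapping.single v k"
    by (rule poly_mapping_eqI) (use assms(1) in \<open>auto simp: pos_part_def vecz_def lookup_single when_def\<close>)
  have q: "Abs_poly_mapping (neg_part (vecz z v k)) = Poly_Mapping.single z k"
    by (rule poly_mapping_eqI) (use assms(1) in \<open>auto simp: neg_part_def vecz_def lookup_single when_def\<close>)
  have "var v ^ k - var z ^ k = (mono (pos_part (vecz z v k)) - mono (neg_part (vecz z v k)) :: ('v,'a) mpoly)"
    by (simp add: mono_single p q var_power)
  also have "\<dots> \<in> L" unfolding L_ideal by (rule ideal_gen.gen) (use assms(2) in blast)
  finally show ?thesis .
qed

end

definition Gp :: "('v \<Rightarrow> nat) \<Rightarrow> 'v \<Rightarrow> ('v, 'a::comm_ring_1) mpoly set" where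
  "Gp n z = {var v ^ n v - var z ^ n v | v. v \<noteq> z}"

definition Box :: "('v \<Rightarrow> nat) \<Rightarrow> 'v \<Rightarrow> ('v \<Rightarrow>\<^sub>0 nat) set" where
  "Box n z = {\<alpha>. Poly_Mapping.lookup \<alpha> z = 0 \<and> (\<forall>v. v \<noteq> z \<longrightarrow> Poly_Mapping.lookup \<alpha> v < n v)}"

definition Jp :: "('v \<Rightarrow> nat) \<Rightarrow> 'v \<Rightarrow> ('v, 'a::comm_ring_1) mpoly set" where
  "Jp n z = ideal_gen (insert (var z) (ideal_gen (Gp n z)))"

lemma Box_down: "\<beta> + \<gamma> \<in> Box n z \<Longrightarrow> \<gamma> \<in> Box n z"
  by (auto simp: Box_def lookup_add)

lemma avoid_closed:
  assumes "X \<subseteq> {f. Poly_Mapping.keys f \<inter> Box n z = {}}"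
  shows "ideal_gen X \<subseteq> {f :: ('v,'a::comm_ring_1) mpoly. Poly_Mapping.keys f \<inter> Box n z = {}}"
proof (rule ideal_gen_closed)
  show "0 \<in> {f :: ('v,'a) mpoly. Poly_Mapping.keys f \<inter> Box n z = {}}" by simp
  fix f g :: "('v,'a) mpoly"
  assume f: "f \<in> {f. Poly_Mapping.keys f \<inter> Box n z = {}}"
  show "g \<in> {f. Poly_Mapping.keys f \<inter> Box n z = {}} \<Longrightarrow> f + g \<in> {f. Poly_Mapping.keys f \<inter> Box n z = {}}"
    using f keys_add[of f g] by auto
  show "g * f \<in> {f. Poly_Mapping.keys f \<inter> Box n z = {}}"
    using f keys_mult[of g f] Box_down by fastforce
qed (rule assms)

lemma Jp_avoid: "Jp n z \<subseteq> {f :: ('v,'a::comm_ring_1) mpoly. Poly_Mapping.keys f \<inter> Box n z = {}}"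
  unfolding Jp_def
proof (rule avoid_closed)
  have "ideal_gen (Gp n z) \<subseteq> {f :: ('v,'a) mpoly. Poly_Mapping.keys f \<inter> Box n z = {}}"
  proof (rule avoid_closed)
    show "Gp n z \<subseteq> {f :: ('v,'a) mpoly. Poly_Mapping.keys f \<inter> Box n z = {}}"
    proof
      fix f :: "('v,'a) mpoly" assume "f \<in> Gp n z"
      then obtain v where v: "v \<noteq> z" "f = var v ^ n v - var z ^ n v" by (auto simp: Gp_def)
      show "f \<in> {f. Poly_Mapping.keys f \<inter> Box n z = {}}"
      proof (cases "n v = 0")
        case True then show ?thesis using v by simp
      next
        case False
        have "Poly_Mapping.keys f \<subseteq> {Poly_Mapping.single v (n v), Poly_Mapping.single z (n v)}"
          using v keys_diff[of "Poly_Mapping.single (Poly_Mapping.single v (n v)) (1::'a)" "Poly_Mapping.single (Poly_Mapping.single z (n v)) 1"]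
          by (auto simp: var_power)
        moreover have "Poly_Mapping.single v (n v) \<notin> Box n z" using v by (auto simp: Box_def)
        moreover have "Poly_Mapping.single z (n v) \<notin> Box n z" using False by (auto simp: Box_def)
        ultimately show ?thesis by auto
      qed
    qed
  qed
  moreover have "Poly_Mapping.single z 1 \<notin> Box n z" by (simp add: Box_def)
  ultimately show "insert (var z) (ideal_gen (Gp n z)) \<subseteq> {f :: ('v,'a) mpoly. Poly_Mapping.keys f \<inter> Box n z = {}}"
    by (auto simp: var_def)
qed

lemma Jp_gen: "f \<in> ideal_gen (Gp n z) \<Longrightarrow> f \<in> Jp n z"
  unfolding Jp_def by (rule ideal_gen.gen) simp

lemma mono_z_in_Jp:
  assumes "1 \<le> Poly_Mapping.lookup \<alpha> z"
  shows "Poly_Mapping.single \<alpha> (1::'a::comm_ring_1) \<in> Jp n z"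
proof -
  have a: "\<alpha> = (\<alpha> - Poly_Mapping.single z 1) + Poly_Mapping.single z 1"
    by (rule poly_mapping_eqI) (use assms in \<open>auto simp: lookup_add lookup_minus lookup_single when_def\<close>)
  have "Poly_Mapping.single \<alpha> (1::'a) = Poly_Mapping.single (\<alpha> - Poly_Mapping.single z 1) 1 * var z"
    by (subst a) (simp add: var_def mult_single)
  also have "\<dots> \<in> Jp n z" unfolding Jp_def by (intro ideal_gen.mult ideal_gen.gen) simp
  finally show ?thesis .
qed

lemma mono_in_Jp:
  assumes npos: "\<And>v. v \<noteq> z \<Longrightarrow> 0 < n v" and a: "\<alpha> \<notin> Box n z"
  shows "Poly_Mapping.single \<alpha> (1::'a::comm_ring_1) \<in> Jp n z"
proof (cases "1 \<le> Poly_Mapping.lookup \<alpha> z")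
  case True then show ?thesis by (rule mono_z_in_Jp)
next
  case False
  then obtain v where v: "v \<noteq> z" "n v \<le> Poly_Mapping.lookup \<alpha> v" using a by (auto simp: Box_def not_less)
  define \<beta> where "\<beta> = \<alpha> - Poly_Mapping.single v (n v)"
  have ab: "\<alpha> = \<beta> + Poly_Mapping.single v (n v)"
    by (rule poly_mapping_eqI) (use v in \<open>auto simp: \<beta>_def lookup_add lookup_minus lookup_single when_def\<close>)
  have "Poly_Mapping.single \<alpha> (1::'a) = Poly_Mapping.single \<beta> 1 * (var v ^ n v - var z ^ n v)
      + Poly_Mapping.single (\<beta> + Poly_Mapping.single z (n v)) 1"
    by (subst ab) (simp add: var_power mult_single algebra_simps)
  also have "\<dots> \<in> Jp n z"
  proof (rule ideal_gen.add[of _ "insert (var z) (ideal_gen (Gp n z))", folded Jp_def])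
    show "Poly_Mapping.single \<beta> 1 * (var v ^ n v - var z ^ n v) \<in> Jp n z"
      unfolding Jp_def by (intro ideal_gen.mult ideal_gen.gen insertI2) (use v in \<open>auto simp: Gp_def\<close>)
    show "Poly_Mapping.single (\<beta> + Poly_Mapping.single z (n v)) (1::'a) \<in> Jp n z"
      by (rule mono_z_in_Jp) (use npos[OF v(1)] in \<open>simp add: lookup_add\<close>)
  qed
  finally show ?thesis .
qed

lemma Jp_closed_sum: "(\<And>i. i \<in> I \<Longrightarrow> p i \<in> Jp n z) \<Longrightarrow> (\<Sum>i\<in>I. p i) \<in> Jp n z"
  unfolding Jp_def by (rule ideal_gen_sum)

lemma Jp_hom:
  assumes npos: "\<And>v. v \<noteq> z \<Longrightarrow> 0 < n v"
  shows "Jp n z \<inter> hom_part d = {f :: ('v::finite,'a::comm_ring_1) mpoly. Poly_Mapping.keys f \<subseteq> Pd d - Box n z}"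
proof
  show "Jp n z \<inter> hom_part d \<subseteq> {f :: ('v,'a) mpoly. Poly_Mapping.keys f \<subseteq> Pd d - Box n z}"
    using Jp_avoid[of n z] unfolding hom_part_keys by blast
  show "{f :: ('v,'a) mpoly. Poly_Mapping.keys f \<subseteq> Pd d - Box n z} \<subseteq> Jp n z \<inter> hom_part d"
  proof
    fix f :: "('v,'a) mpoly" assume f: "f \<in> {f. Poly_Mapping.keys f \<subseteq> Pd d - Box n z}"
    have "f = (\<Sum>\<alpha>\<in>Poly_Mapping.keys f. Poly_Mapping.single \<alpha> (Poly_Mapping.lookup f \<alpha>))"
      by (rule pm_expand) simp_all
    also have "\<dots> = (\<Sum>\<alpha>\<in>Poly_Mapping.keys f. Poly_Mapping.single 0 (Poly_Mapping.lookup f \<alpha>) * Poly_Mapping.single \<alpha> 1)"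
      by (simp add: mult_single)
    also have "\<dots> \<in> Jp n z"
    proof (intro Jp_closed_sum)
      fix \<alpha> assume "\<alpha> \<in> Poly_Mapping.keys f"
      then have "\<alpha> \<notin> Box n z" using f by auto
      then have "Poly_Mapping.single \<alpha> (1::'a) \<in> Jp n z" by (rule mono_in_Jp[rotated]) (rule npos)
      then show "Poly_Mapping.single 0 (Poly_Mapping.lookup f \<alpha>) * Poly_Mapping.single \<alpha> 1 \<in> Jp n z"
        unfolding Jp_def by (rule ideal_gen.mult)
    qed
    finally show "f \<in> Jp n z \<inter> hom_part d" using f by (auto simp: hom_part_keys)
  qed
qed

lemma hilbert_Jp:
  assumes npos: "\<And>v. v \<noteq> z \<Longrightarrow> 0 < n v"
  shows "hilbert_fun (Jp n z :: ('v::finite,'a::field) mpoly set) d = card (Pd d \<inter> Box n z)"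
proof -
  have fin: "finite (Pd d :: ('v \<Rightarrow>\<^sub>0 nat) set)" by (rule finite_Pd)
  have eq: "Jp n z \<inter> hom_part d = {f :: ('v,'a) mpoly. Poly_Mapping.keys f \<subseteq> Pd d - Box n z}"
    by (rule Jp_hom) (rule npos)
  have "hilbert_fun (Jp n z :: ('v,'a) mpoly set) d = card (Pd d :: ('v \<Rightarrow>\<^sub>0 nat) set) - card (Pd d - Box n z)"
    unfolding hilbert_fun_def eq dim_hom_part
    by (subst dim_monos) (use fin in auto)
  also have "\<dots> = card (Pd d \<inter> Box n z)"
    using card_Diff_subset_Int[of "Pd d" "Box n z"] fin card_mono[OF fin, of "Pd d \<inter> Box n z"] by auto
  finally show ?thesis .
qed

lemma Box_deg:
  fixes z :: "'v::finite"
  assumes "\<alpha> \<in> Box n z"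
  shows "mdeg \<alpha> \<le> (\<Sum>v\<in>UNIV - {z}. n v - 1)"
proof -
  have "mdeg \<alpha> = sz z \<alpha>" using assms mdeg_sz[of \<alpha> z] by (simp add: Box_def)
  also have "\<dots> \<le> (\<Sum>v\<in>UNIV - {z}. n v - 1)" unfolding sz_def
    by (rule sum_mono) (use assms in \<open>auto simp: Box_def\<close>)
  finally show ?thesis .
qed

lemma Box_top:
  assumes npos: "\<And>v. v \<noteq> z \<Longrightarrow> 0 < n v"
  shows "Abs_poly_mapping (\<lambda>w. if w = z then 0 else n w - 1) \<in> Pd (\<Sum>v\<in>UNIV - {z}. n v - 1) \<inter> Box n (z::'v::finite)"
proof -
  let ?b = "Abs_poly_mapping (\<lambda>w. if w = z then 0 else n w - 1)"
  have "mdeg ?b = (\<Sum>v\<in>UNIV - {z}. n v - 1)"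
    using mdeg_sz[of ?b z] by (simp add: sz_def)
  moreover have "?b \<in> Box n z" using npos by (auto simp: Box_def)
  ultimately show ?thesis by (simp add: Pd_def)
qed

lemma hilbert_poly_eqI:
  assumes "\<forall>\<^sub>F d in sequentially. poly p (real d) = real (hilbert_fun I d)"
  shows "hilbert_poly I = p"
  unfolding hilbert_poly_def
proof (rule the_equality)
  show "\<forall>\<^sub>F d in sequentially. poly p (real d) = real (hilbert_fun I d)" by (rule assms)
  fix q assume "\<forall>\<^sub>F d in sequentially. poly q (real d) = real (hilbert_fun I d)"
  with assms have "\<forall>\<^sub>F d in sequentially. poly q (real d) = poly p (real d)"
    by eventually_elim simp
  then show "q = p" by (rule poly_eventually_unique)
qed

lemma hilbert_poly_zero:
  assumes "\<And>d. d > M \<Longrightarrow> hilbert_fun I d = 0"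
  shows "hilbert_poly I = 0"
  by (rule hilbert_poly_eqI[where p=0]) (use assms in \<open>auto simp: eventually_sequentially intro!: exI[of _ "Suc M"]\<close>)

lemma reg_le:
  assumes "\<And>d. d > M \<Longrightarrow> hilbert_fun I d = 0"
  shows "reg_index I \<le> M + 1"
proof -
  have "\<forall>d\<ge>M + 1. poly (hilbert_poly I) (real d) = real (hilbert_fun I d)"
    using assms hilbert_poly_zero[of M I] by auto
  then show ?thesis unfolding reg_index_def by (rule Least_le)
qed

lemma reg_eq:
  assumes "\<And>d. d > M \<Longrightarrow> hilbert_fun I d = 0" and "hilbert_fun I M \<noteq> 0"
  shows "reg_index I = M + 1"
proof -
  have hp: "hilbert_poly I = 0" by (rule hilbert_poly_zero[OF assms(1)])
  have h1: "\<forall>d\<ge>M + 1. poly (hilbert_poly I) (real d) = real (hilbert_fun I d)"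
    using assms(1) hp by auto
  have h2: "M + 1 \<le> r" if r: "\<forall>d\<ge>r. poly (hilbert_poly I) (real d) = real (hilbert_fun I d)" for r
  proof (rule ccontr)
    assume "\<not> M + 1 \<le> r"
    then have "r \<le> M" by simp
    then show False using r assms(2) hp by auto
  qed
  show ?thesis unfolding reg_index_def
    by (rule Least_equality[where P="\<lambda>r. \<forall>d\<ge>r. poly (hilbert_poly I) (real d) = real (hilbert_fun I d)", OF h1 h2])
qed

lemma Jp_reg:
  fixes z :: "'v::finite" and n :: "'v \<Rightarrow> nat"
  assumes npos0: "\<forall>v. v \<noteq> z \<longrightarrow> 0 < n v"
  shows "reg_index (ideal_gen (insert (var z) (ideal_gen {var v ^ n v - var z ^ n v | v. v \<noteq> z})) :: ('v,'b::field) mpoly set)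
     = (\<Sum>v\<in>UNIV - {z}. n v - 1) + 1"
proof -
  have npos: "\<And>v. v \<noteq> z \<Longrightarrow> 0 < n v" using npos0 by blast
  define M where "M = (\<Sum>v\<in>UNIV - {z}. n v - 1)"
  have Pd_empty: "Pd d \<inter> Box n z = {}" if "d > M" for d
  proof -
    have "\<alpha> \<notin> Box n z" if "mdeg \<alpha> = d" for \<alpha>
      using Box_deg[of \<alpha> n z] \<open>d > M\<close> that by (auto simp: M_def)
    then show ?thesis by (auto simp: Pd_def)
  qed
  have hj: "hilbert_fun (Jp n z :: ('v,'b) mpoly set) d = card (Pd d \<inter> Box n z)" for d
    by (rule hilbert_Jp) (rule npos)
  have HJp0: "hilbert_fun (Jp n z :: ('v,'b) mpoly set) d = 0" if "d > M" for d
    by (simp only: hj Pd_empty[OF that] card.empty)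
  have HJpM: "hilbert_fun (Jp n z :: ('v,'b) mpoly set) M \<noteq> 0"
  proof -
    have "Pd M \<inter> Box n z \<noteq> {}" using Box_top[of z n, OF npos] by (auto simp: M_def)
    moreover have "finite (Pd M \<inter> Box n z)" by (simp add: finite_Pd)
    ultimately show ?thesis by (simp only: hj card_0_eq) simp
  qed
  have "reg_index (Jp n z :: ('v,'b) mpoly set) = M + 1" by (rule reg_eq[OF HJp0 HJpM])
  then show ?thesis by (simp add: Jp_def Gp_def M_def)
qed

theorem proposition3p12:
  fixes L :: "('v::finite, 'a::field) mpoly set" and z :: 'v
  assumes "card (UNIV :: 'v set) \<ge> 2"
    and "is_lattice_ideal L" and "graded_ideal L"
    and "quot_dim L = 1"
  shows "\<exists>n :: 'v \<Rightarrow> nat. (\<forall>v. v \<noteq> z \<longrightarrow> n v > 0) \<and>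
     ideal_gen {var v ^ n v - var z ^ n v | v. v \<noteq> z} \<subseteq> L \<and>
     reg_index (ideal_gen (insert (var z) L))
       \<le> reg_index (ideal_gen (insert (var z) (ideal_gen {var v ^ n v - var z ^ n v | v. v \<noteq> z}))) \<and>
     reg_index (ideal_gen (insert (var z) (ideal_gen {var v ^ n v - var z ^ n v | v. v \<noteq> z})))
       = (\<Sum>v\<in>UNIV - {z}. n v - 1) + 1 \<and>
     (\<forall>d \<ge> (\<Sum>v\<in>UNIV - {z}. n v - 1) + 1.
        hilbert_fun L d = hilbert_fun L (d - 1) \<and> real (hilbert_fun L d) = quot_deg L)"
proof -
  obtain Lt where lat: "is_lattice Lt" and Ldef: "L = lattice_ideal_of Lt"
    using assms(2) by (auto simp: is_lattice_ideal_def)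
  interpret latid Lt L by unfold_locales (use lat Ldef assms(3) in auto)
  have full: "\<forall>v. v \<noteq> z \<longrightarrow> (\<exists>k>0. vecz z v k \<in> Lt)"
  proof (rule ccontr)
    assume "\<not> ?thesis"
    then obtain v where v1: "v \<noteq> z" and v2': "\<not> (\<exists>k>0. vecz z v k \<in> Lt)" by blast
    have v2: "\<And>k. k > 0 \<Longrightarrow> vecz z v k \<notin> Lt" using v2' by blast
    have grow: "d + 1 \<le> hilbert_fun L d" for d by (rule deficient_grow[OF v1 v2])
    obtain p where p: "\<forall>\<^sub>F d in sequentially. poly p (real d) = real (hilbert_fun L d)"
      using EP_L by (auto simp: EP_def)
    have hp: "hilbert_poly L = p" by (rule hilbert_poly_eqI[OF p])
    have "degree p = 0" using assms(4) hp by (simp add: quot_dim_def split: if_splits)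
    then have pc: "[:coeff p 0:] = p" by (rule degree_0_id)
    obtain N where N: "\<And>d. d \<ge> N \<Longrightarrow> poly p (real d) = real (hilbert_fun L d)"
      using p by (auto simp: eventually_sequentially)
    define d where "d = max N (nat \<lceil>coeff p 0\<rceil>)"
    have "poly p (real d) = real (hilbert_fun L d)" by (rule N) (simp add: d_def)
    then have e: "coeff p 0 = real (hilbert_fun L d)" by (subst (asm) pc[symmetric]) simp
    have "coeff p 0 \<le> real d" unfolding d_def by linarith
    moreover have "real d + 1 \<le> real (hilbert_fun L d)" using grow[of d] by linarith
    ultimately show False using e by linarith
  qed
  define n where "n v = (if v = z then 1 else (SOME k. k > 0 \<and> vecz z v k \<in> Lt))" for v
  have n: "0 < n v \<and> vecz z v (n v) \<in> Lt" if "v \<noteq> z" for v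
    using full that someI_ex[of "\<lambda>k. k > 0 \<and> vecz z v k \<in> Lt"] by (auto simp: n_def)
  have npos: "0 < n v" if "v \<noteq> z" for v using n[OF that] by blast
  define M where "M = (\<Sum>v\<in>UNIV - {z}. n v - 1)"
  have GpL: "Gp n z \<subseteq> L" using binom_gen_in_L n by (auto simp: Gp_def)
  have sub: "ideal_gen (Gp n z) \<subseteq> L"
    using ideal_gen_mono[OF GpL] L_is_ideal by simp
  have Pd_empty: "Pd d \<inter> Box n z = {}" if "d > M" for d
  proof -
    have "\<alpha> \<notin> Box n z" if "mdeg \<alpha> = d" for \<alpha>
      using Box_deg[of \<alpha> n z] \<open>d > M\<close> that by (auto simp: M_def)
    then show ?thesis by (auto simp: Pd_def)
  qed
  define J where "J = ideal_gen (insert (var z) L)"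
  have JpJ: "Jp n z \<subseteq> J" unfolding Jp_def J_def by (rule ideal_gen_mono) (use sub in auto)
  have HJ0: "hilbert_fun J d = 0" if d: "d > M" for d
  proof -
    have "Jp n z \<inter> hom_part d = {f :: ('v,'a) mpoly. Poly_Mapping.keys f \<subseteq> Pd d - Box n z}"
      by (rule Jp_hom) (rule npos)
    also have "\<dots> = hom_part d" using Pd_empty[OF d] by (auto simp: hom_part_keys)
    finally have "hom_part d \<subseteq> J" using JpJ by auto
    then have "J \<inter> hom_part d = hom_part d" by auto
    then show ?thesis by (simp add: hilbert_fun_def)
  qed
  have regJ: "reg_index J \<le> M + 1" by (rule reg_le[OF HJ0])
  have HLc: "hilbert_fun L d = hilbert_fun L M" if "d \<ge> M" for d
    unfolding M_def by (rule hilbert_const) (use n that in \<open>auto simp: M_def\<close>)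
  have hpL: "hilbert_poly L = [:real (hilbert_fun L M):]"
  proof (rule hilbert_poly_eqI)
    show "\<forall>\<^sub>F d in sequentially. poly [:real (hilbert_fun L M):] (real d) = real (hilbert_fun L d)"
      unfolding eventually_sequentially
    proof (intro exI[of _ M] allI impI)
      fix d assume "M \<le> d"
      then have "hilbert_fun L d = hilbert_fun L M" by (rule HLc)
      then show "poly [:real (hilbert_fun L M):] (real d) = real (hilbert_fun L d)" by simp
    qed
  qed
  have "hilbert_poly L \<noteq> 0" using assms(4) by (auto simp: quot_dim_def)
  then have qd: "quot_deg L = real (hilbert_fun L M)" using hpL by (simp add: quot_deg_def)
  have e2: "ideal_gen {var v ^ n v - var z ^ n v | v. v \<noteq> z} = ideal_gen (Gp n z :: ('v,'a) mpoly set)" by (simp add: Gp_def)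
  have e3: "(\<Sum>v\<in>UNIV - {z}. n v - 1) = M" by (simp add: M_def)
  have c: "\<forall>d \<ge> M + 1. hilbert_fun L d = hilbert_fun L (d - 1) \<and> real (hilbert_fun L d) = quot_deg L"
  proof (intro allI impI)
    fix d assume d: "M + 1 \<le> d"
    have h1: "hilbert_fun L d = hilbert_fun L M" using d by (intro HLc) simp
    have h2: "hilbert_fun L (d - 1) = hilbert_fun L M" using d by (intro HLc) simp
    show "hilbert_fun L d = hilbert_fun L (d - 1) \<and> real (hilbert_fun L d) = quot_deg L"
      using h1 h2 qd by simp
  qed
  show ?thesis
    apply (rule exI[of _ n])
    apply (intro conjI)
    subgoal using npos by blast
    subgoal using sub by (simp add: Gp_def)
    subgoal apply (subst Jp_reg) using npos regJ by (auto simp: J_def M_def)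
    subgoal by (rule Jp_reg) (use npos in blast)
    subgoal using c unfolding M_def by assumption
    done
qed

end
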